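(* Let $q$ be a prime power, $k\ge 1$ and $n\ge 2k+1$. Let $\mathcal{L}$ be a set of affine $k$-spaces of $\mathrm{AG}(n,q)$ with $|\mathcal{L}|=x\left[{n\atop k}\right]_q$ for a positive integer $x$. Then the following are equivalent: (1) $\mathcal{L}$ is a Cameron-Liebler $k$-set of $\mathrm{AG}(n,q)$; (2) for every $k$-spread $\mathcal{S}$ of $\mathrm{AG}(n,q)$, $|\mathcal{L}\cap\mathcal{S}|=x$; (3) for every pair $\mathcal{R},\mathcal{R}'$ of conjugated switching $k$-sets of $\mathrm{AG}(n,q)$, $|\mathcal{L}\cap\mathcal{R}|=|\mathcal{L}\cap\mathcal{R}'|$. Moreover, if $k=1$, these are also equivalent to: (4) for every affine line $\ell$, the number of elements of $\mathcal{L}$ sharing no affine point with $\ell$ equals $\left(q^2\left[{n-2\atop 1}\right]_q+1\right)(x-\chi_{\mathcal{L}}(\ell))$, and through every point of $\pi_\infty$ there pass exactly $x$ lines of $\mathcal{L}$ (i.e. exactly $x$ lines of $\mathcal{L}$ whose projective closure contains that point).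
   Context: $\mathrm{AG}(n,q)$ is $\mathrm{PG}(n,q)$ with a hyperplane $\pi_\infty$ (hyperplane at infinity) removed; affine points are the points outside $\pi_\infty$, affine $k$-spaces are the $k$-dimensional projective subspaces not contained in $\pi_\infty$ (identified with their affine point sets). $\left[{a\atop b}\right]_q=\frac{(q^a-1)\cdots(q^{a-b+1}-1)}{(q^b-1)\cdots(q-1)}$. With $A_n$ the incidence matrix of affine points versus affine $k$-spaces, a set of affine $k$-spaces is a Cameron-Liebler $k$-set of $\mathrm{AG}(n,q)$ if its characteristic vector lies in the real row space $\mathrm{Im}(A_n^T)$. A partial $k$-spread is a set of affine $k$-spaces pairwise sharing no affine point; a $k$-spread is a partial $k$-spread covering all affine points. A pair of conjugated switching $k$-sets is a pair of disjoint partial $k$-spreads covering the same set of affine points. $\chi_{\mathcal{L}}(\ell)$ is $1$ if $\ell\in\mathcal{L}$ and $0$ otherwise. *)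

theory Defs
  imports Complex_Main "HOL-Library.Cardinality"
begin

text \<open>Model of AG(n,q): the points are the vectors 'n => 'a over a finite field 'a,
  with CARD('n) = n and CARD('a) = q.\<close>

definition aff_span :: "nat \<Rightarrow> ('n \<Rightarrow> 'a::field) \<Rightarrow> (nat \<Rightarrow> 'n \<Rightarrow> 'a) \<Rightarrow> ('n \<Rightarrow> 'a) set" where
  "aff_span k p vs = {x. \<exists>c::nat \<Rightarrow> 'a. x = (\<lambda>i. p i + (\<Sum>j<k. c j * vs j i))}"

definition lin_indep :: "nat \<Rightarrow> (nat \<Rightarrow> 'n \<Rightarrow> 'a::field) \<Rightarrow> bool" where
  "lin_indep k vs \<longleftrightarrow> (\<forall>c::nat \<Rightarrow> 'a. (\<forall>i. (\<Sum>j<k. c j * vs j i) = 0) \<longrightarrow> (\<forall>j<k. c j = 0))"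

definition affine_kspaces :: "nat \<Rightarrow> ('n \<Rightarrow> 'a::field) set set" where
  "affine_kspaces k = {S. \<exists>p vs. lin_indep k vs \<and> S = aff_span k p vs}"

text \<open>Characteristic vector in Im(A^T): chi_L(S) = sum over points P in S of w(P).\<close>
definition cameron_liebler :: "nat \<Rightarrow> ('n \<Rightarrow> 'a::field) set set \<Rightarrow> bool" where
  "cameron_liebler k L \<longleftrightarrow>
     (\<exists>w::('n \<Rightarrow> 'a) \<Rightarrow> real. \<forall>S\<in>affine_kspaces k. (if S \<in> L then 1 else 0) = (\<Sum>P\<in>S. w P))"

definition partial_spread :: "nat \<Rightarrow> ('n \<Rightarrow> 'a::field) set set \<Rightarrow> bool" where
  "partial_spread k R \<longleftrightarrow> R \<subseteq> affine_kspaces k \<and> (\<forall>S\<in>R. \<forall>T\<in>R. S \<noteq> T \<longrightarrow> S \<inter> T = {})"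

definition spread :: "nat \<Rightarrow> ('n \<Rightarrow> 'a::field) set set \<Rightarrow> bool" where
  "spread k R \<longleftrightarrow> partial_spread k R \<and> \<Union>R = UNIV"

definition conj_switching :: "nat \<Rightarrow> ('n \<Rightarrow> 'a::field) set set \<Rightarrow> ('n \<Rightarrow> 'a) set set \<Rightarrow> bool" where
  "conj_switching k R R' \<longleftrightarrow> partial_spread k R \<and> partial_spread k R' \<and> R \<inter> R' = {} \<and> \<Union>R = \<Union>R'"

definition gauss_binom :: "real \<Rightarrow> nat \<Rightarrow> nat \<Rightarrow> real" where
  "gauss_binom q a b = (\<Prod>i<b. q ^ (a - i) - 1) / (\<Prod>i<b. q ^ (i + 1) - 1)"

end

theory Submission
  imports Defs "HOL-Library.Function_Algebras" "HOL-Library.FuncSet"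
begin


definition lc :: "nat \<Rightarrow> (nat \<Rightarrow> 'a) \<Rightarrow> (nat \<Rightarrow> 'n \<Rightarrow> 'a::field) \<Rightarrow> ('n \<Rightarrow> 'a)" where
  "lc k c vs = (\<lambda>i. \<Sum>j<k. c j * vs j i)"

definition sp :: "nat \<Rightarrow> (nat \<Rightarrow> 'n \<Rightarrow> 'a::field) \<Rightarrow> ('n \<Rightarrow> 'a) set" where
  "sp k vs = range (\<lambda>c. lc k c vs)"

definition sm :: "'a \<Rightarrow> ('n \<Rightarrow> 'a::field) \<Rightarrow> ('n \<Rightarrow> 'a)" where
  "sm a v = (\<lambda>i. a * v i)"

definition subsp :: "('n \<Rightarrow> 'a::field) set \<Rightarrow> bool" where
  "subsp W \<longleftrightarrow> 0 \<in> W \<and> (\<forall>x\<in>W. \<forall>y\<in>W. x + y \<in> W) \<and> (\<forall>a. \<forall>x\<in>W. sm a x \<in> W)"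

definition tr :: "('n \<Rightarrow> 'a::field) \<Rightarrow> ('n \<Rightarrow> 'a) set \<Rightarrow> ('n \<Rightarrow> 'a) set" where
  "tr p U = (\<lambda>u. p + u) ` U"

definition Sub :: "nat \<Rightarrow> ('n \<Rightarrow> 'a::field) set set" where
  "Sub k = {sp k vs | vs. lin_indep k vs}"

definition dir :: "('n \<Rightarrow> 'a::field) set \<Rightarrow> ('n \<Rightarrow> 'a) set" where
  "dir S = {a - b | a b. a \<in> S \<and> b \<in> S}"

lemma lc_Suc: "lc (Suc k) c vs = lc k c vs + sm (c k) (vs k)"
  by (simp add: lc_def sm_def fun_eq_iff)

lemma lc_0[simp]: "lc 0 c vs = 0"
  by (simp add: lc_def fun_eq_iff)

lemma lc_add: "lc k c vs + lc k d vs = lc k (\<lambda>j. c j + d j) vs"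
  by (simp add: lc_def fun_eq_iff sum.distrib algebra_simps)

lemma lc_sm: "sm a (lc k c vs) = lc k (\<lambda>j. a * c j) vs"
  by (simp add: lc_def sm_def fun_eq_iff sum_distrib_left algebra_simps)

lemma lc_cong: "(\<And>j. j < k \<Longrightarrow> c j = d j) \<Longrightarrow> (\<And>j. j < k \<Longrightarrow> vs j = ws j) \<Longrightarrow> lc k c vs = lc k d ws"
  by (simp add: lc_def fun_eq_iff)

lemma subsp_sp: "subsp (sp k vs)"
  unfolding subsp_def sp_def
proof (intro conjI ballI allI)
  show "0 \<in> range (\<lambda>c. lc k c vs)" by (rule range_eqI[of _ _ "\<lambda>_. 0"]) (simp add: lc_def fun_eq_iff)
next
  fix x y assume "x \<in> range (\<lambda>c. lc k c vs)" "y \<in> range (\<lambda>c. lc k c vs)"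
  then show "x + y \<in> range (\<lambda>c. lc k c vs)" by (auto simp: lc_add)
next
  fix a x assume "x \<in> range (\<lambda>c. lc k c vs)"
  then show "sm a x \<in> range (\<lambda>c. lc k c vs)" by (auto simp: lc_sm)
qed

lemma subsp_lc: "subsp W \<Longrightarrow> (\<And>j. j < k \<Longrightarrow> vs j \<in> W) \<Longrightarrow> lc k c vs \<in> W"
proof (induction k)
  case 0 then show ?case unfolding subsp_def by (metis lc_0)
next
  case (Suc k)
  then have "lc k c vs \<in> W" by auto
  moreover have "sm (c k) (vs k) \<in> W" using Suc.prems unfolding subsp_def by auto
  ultimately show ?case using Suc.prems(1) unfolding subsp_def lc_Suc by blast
qed

lemma sp_subset: "subsp W \<Longrightarrow> (\<And>j. j < k \<Longrightarrow> vs j \<in> W) \<Longrightarrow> sp k vs \<subseteq> W"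
  unfolding sp_def using subsp_lc[of W k vs] by blast

lemma vs_in_sp: "j < k \<Longrightarrow> vs j \<in> sp k vs"
proof -
  assume j: "j < k"
  have "lc k (\<lambda>i. if i = j then 1 else 0) vs = vs j"
    using j by (simp add: lc_def fun_eq_iff if_distrib[where f="\<lambda>a. a * b" for b] sum.delta cong: if_cong)
  then show ?thesis unfolding sp_def by (metis rangeI)
qed

lemma sp_cong: "(\<And>j. j < k \<Longrightarrow> vs j = ws j) \<Longrightarrow> sp k vs = sp k ws"
  unfolding sp_def by (metis (no_types, lifting) lc_cong image_cong)

lemma lin_indep_cong: "(\<And>j. j < k \<Longrightarrow> vs j = ws j) \<Longrightarrow> lin_indep k vs = lin_indep k ws"
  unfolding lin_indep_def by simp

lemma lin_indep_lc: "lin_indep k vs \<longleftrightarrow> (\<forall>c. lc k c vs = 0 \<longrightarrow> (\<forall>j<k. c j = 0))"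
  unfolding lin_indep_def lc_def by (simp add: fun_eq_iff)

lemma lc_inj: "lin_indep k vs \<Longrightarrow> lc k c vs = lc k d vs \<Longrightarrow> j < k \<Longrightarrow> c j = d j"
proof -
  assume li: "lin_indep k vs" and e: "lc k c vs = lc k d vs" and j: "j < k"
  have "lc k (\<lambda>j. c j + (- 1) * d j) vs = 0"
    using e by (simp add: lc_def fun_eq_iff algebra_simps sum_subtractf)
  then show ?thesis using li j unfolding lin_indep_lc by fastforce
qed

lemma sp_eq_image: "sp k vs = (\<lambda>c. lc k c vs) ` (PiE {..<k} (\<lambda>_. UNIV))"
proof
  show "sp k vs \<subseteq> (\<lambda>c. lc k c vs) ` (PiE {..<k} (\<lambda>_. UNIV))"
  proof
    fix x assume "x \<in> sp k vs"
    then obtain c where x: "x = lc k c vs" by (auto simp: sp_def)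
    have "lc k c vs = lc k (restrict c {..<k}) vs" by (rule lc_cong) auto
    moreover have "restrict c {..<k} \<in> PiE {..<k} (\<lambda>_. UNIV)" by auto
    ultimately show "x \<in> (\<lambda>c. lc k c vs) ` (PiE {..<k} (\<lambda>_. UNIV))" using x by blast
  qed
qed (auto simp: sp_def)

lemma card_sp: "lin_indep k vs \<Longrightarrow> card (sp k vs) = CARD('a) ^ k"
  for vs :: "nat \<Rightarrow> 'n \<Rightarrow> 'a::{field,finite}"
proof -
  assume li: "lin_indep k vs"
  have "inj_on (\<lambda>c. lc k c vs) (PiE {..<k} (\<lambda>_. UNIV::'a set))"
  proof (rule inj_onI)
    fix c d assume c: "c \<in> PiE {..<k} (\<lambda>_. UNIV::'a set)" and d: "d \<in> PiE {..<k} (\<lambda>_. UNIV::'a set)"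
      and e: "lc k c vs = lc k d vs"
    show "c = d"
    proof
      fix j show "c j = d j"
      proof (cases "j < k")
        case True then show ?thesis using lc_inj[OF li e] by blast
      next
        case False then show ?thesis using c d by (auto simp: PiE_def extensional_def)
      qed
    qed
  qed
  then have "card (sp k vs) = card (PiE {..<k} (\<lambda>_. UNIV::'a set))"
    by (simp add: sp_eq_image card_image)
  also have "\<dots> = CARD('a) ^ k" by (simp add: card_PiE)
  finally show ?thesis .
qed

lemma lin_indep_Suc: "lin_indep (Suc k) vs \<longleftrightarrow> lin_indep k vs \<and> vs k \<notin> sp k vs"
proof
  assume li: "lin_indep (Suc k) vs"
  have "lin_indep k vs"
    unfolding lin_indep_lc
  proof (rule allI, rule impI)
    fix c assume "lc k c vs = 0"
    moreover have "lc k (c(k := 0)) vs = lc k c vs" by (rule lc_cong) auto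
    ultimately have "lc (Suc k) (c(k := 0)) vs = 0"
      by (simp add: lc_Suc sm_def zero_fun_def)
    then show "\<forall>j<k. c j = 0" using li unfolding lin_indep_lc
      by (metis fun_upd_apply less_Suc_eq nat_neq_iff)
  qed
  moreover have "vs k \<notin> sp k vs"
  proof
    assume "vs k \<in> sp k vs"
    then obtain c where c: "vs k = lc k c vs" by (auto simp: sp_def)
    have "lc k (c(k := -1)) vs = lc k c vs" by (rule lc_cong) auto
    then have "lc (Suc k) (c(k := -1)) vs = lc k c vs + sm (-1) (vs k)"
      by (simp add: lc_Suc)
    also have "\<dots> = 0" using c by (simp add: sm_def fun_eq_iff)
    finally have "(c(k := -1)) k = 0" using li unfolding lin_indep_lc by blast
    then show False by simp
  qed
  ultimately show "lin_indep k vs \<and> vs k \<notin> sp k vs" by blast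
next
  assume a: "lin_indep k vs \<and> vs k \<notin> sp k vs"
  show "lin_indep (Suc k) vs"
    unfolding lin_indep_lc
  proof (rule allI, rule impI)
    fix c assume e: "lc (Suc k) c vs = 0"
    have ck: "c k = 0"
    proof (rule ccontr)
      assume nz: "c k \<noteq> 0"
      have "lc k c vs + sm (c k) (vs k) = 0" using e by (simp add: lc_Suc)
      then have h: "\<And>i. lc k c vs i + c k * vs k i = 0" by (simp add: sm_def fun_eq_iff)
      have "vs k = sm (- 1 / c k) (lc k c vs)"
      proof
        fix i have "lc k c vs i = - (c k * vs k i)" using h[of i] by (simp add: eq_neg_iff_add_eq_0)
        then show "vs k i = sm (- 1 / c k) (lc k c vs) i" using nz by (simp add: sm_def)
      qed
      then have "vs k = lc k (\<lambda>j. (- 1 / c k) * c j) vs" by (simp add: lc_sm)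
      then show False using a by (auto simp: sp_def)
    qed
    then have "lc k c vs = 0" using e by (simp add: lc_Suc sm_def zero_fun_def)
    then have "\<forall>j<k. c j = 0" using a unfolding lin_indep_lc by blast
    then show "\<forall>j<Suc k. c j = 0" using ck less_Suc_eq by auto
  qed
qed

lemma lin_indep_mono: "lin_indep l vs \<Longrightarrow> j \<le> l \<Longrightarrow> lin_indep j vs"
proof (induction l)
  case 0 then show ?case by simp
next
  case (Suc l) then show ?case using lin_indep_Suc le_Suc_eq by blast
qed



definition extt :: "('n \<Rightarrow> 'a::field) set \<Rightarrow> (nat \<Rightarrow> 'n \<Rightarrow> 'a) \<Rightarrow> nat \<Rightarrow> nat \<Rightarrow> (nat \<Rightarrow> 'n \<Rightarrow> 'a) set" where
  "extt W b j l = {vs \<in> PiE {..<l} (\<lambda>_. W). lin_indep l vs \<and> (\<forall>i<j. vs i = b i)}"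

lemma extt_base: "lin_indep j b \<Longrightarrow> (\<And>i. i < j \<Longrightarrow> b i \<in> W) \<Longrightarrow> extt W b j j = {restrict b {..<j}}"
proof -
  assume li: "lin_indep j b" and bW: "\<And>i. i < j \<Longrightarrow> b i \<in> W"
  have "restrict b {..<j} \<in> extt W b j j"
    unfolding extt_def using bW lin_indep_cong[of j "restrict b {..<j}" b] li by auto
  moreover have "vs = restrict b {..<j}" if "vs \<in> extt W b j j" for vs
    using that unfolding extt_def by (auto simp: PiE_def extensional_def fun_eq_iff)
  ultimately show ?thesis by blast
qed

lemma extt_step:
  assumes "j \<le> l"
  shows "extt W b j (Suc l) = (\<lambda>(vs, v). vs(l := v)) ` (SIGMA vs:extt W b j l. W - sp l vs)"
proof
  show "extt W b j (Suc l) \<subseteq> (\<lambda>(vs, v). vs(l := v)) ` (SIGMA vs:extt W b j l. W - sp l vs)"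
  proof
    fix ws assume ws: "ws \<in> extt W b j (Suc l)"
    define vs where "vs = restrict ws {..<l}"
    have e: "ws = vs(l := ws l)"
      using ws unfolding vs_def extt_def by (auto simp: PiE_def extensional_def fun_eq_iff)
    have li: "lin_indep (Suc l) ws" using ws by (simp add: extt_def)
    have c1: "lin_indep l vs = lin_indep l ws" by (rule lin_indep_cong) (simp add: vs_def)
    have c2: "sp l vs = sp l ws" by (rule sp_cong) (simp add: vs_def)
    have "vs \<in> extt W b j l"
      using ws c1 li lin_indep_Suc assms unfolding extt_def vs_def by (auto simp: PiE_def)
    moreover have "ws l \<in> W - sp l vs" using ws li c2 lin_indep_Suc unfolding extt_def by auto
    ultimately show "ws \<in> (\<lambda>(vs, v). vs(l := v)) ` (SIGMA vs:extt W b j l. W - sp l vs)"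
      using e by (intro image_eqI[of _ _ "(vs, ws l)"]) auto
  qed
next
  show "(\<lambda>(vs, v). vs(l := v)) ` (SIGMA vs:extt W b j l. W - sp l vs) \<subseteq> extt W b j (Suc l)"
  proof clarify
    fix vs v assume vs: "vs \<in> extt W b j l" and v: "v \<in> W" "v \<notin> sp l vs"
    have c1: "lin_indep l (vs(l := v)) = lin_indep l vs" by (rule lin_indep_cong) simp
    have c2: "sp l (vs(l := v)) = sp l vs" by (rule sp_cong) simp
    have "lin_indep l vs" using vs unfolding extt_def by auto
    then have "lin_indep (Suc l) (vs(l := v))" using c1 c2 v lin_indep_Suc[of l "vs(l := v)"] by simp
    then show "vs(l := v) \<in> extt W b j (Suc l)"
      using vs v assms unfolding extt_def by (auto simp: PiE_def extensional_def Pi_iff less_Suc_eq)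
  qed
qed

lemma extt_inj: "inj_on (\<lambda>(vs, v). vs(l := v)) (SIGMA vs:extt W b j l. W - sp l vs)"
proof (rule inj_onI, clarify)
  fix vs v vs' v'
  assume a: "vs \<in> extt W b j l" "vs' \<in> extt W b j l" and e: "vs(l := v) = vs'(l := v')"
  have "v = v'" using fun_cong[OF e, of l] by simp
  moreover have "vs = vs'"
  proof
    fix i show "vs i = vs' i"
    proof (cases "i = l")
      case True then show ?thesis using a unfolding extt_def by (auto simp: PiE_def extensional_def)
    next
      case False then show ?thesis using fun_cong[OF e, of i] by simp
    qed
  qed
  ultimately show "vs = vs' \<and> v = v'" by simp
qed

lemma card_extt:
  fixes W :: "('n::finite \<Rightarrow> 'a::{field,finite}) set"
  assumes W: "subsp W" "card W = CARD('a) ^ m" and b: "lin_indep j b" "\<And>i. i < j \<Longrightarrow> b i \<in> W"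
    and jl: "j \<le> l" and lm: "l \<le> m"
  shows "card (extt W b j l) = (\<Prod>i\<in>{j..<l}. CARD('a) ^ m - CARD('a) ^ i)"
  using jl lm
proof (induction l rule: dec_induct)
  case base
  then show ?case using extt_base[OF b] by simp
next
  case (step l)
  have fin: "finite (extt W b j l)"
    by (rule finite_subset[of _ "PiE {..<l} (\<lambda>_. W)"]) (auto simp: extt_def intro!: finite_PiE finite_subset[of W UNIV])
  have "card (extt W b j (Suc l)) = card ((\<lambda>(vs, v). vs(l := v)) ` (SIGMA vs:extt W b j l. W - sp l vs))"
    by (simp only: extt_step[OF step.hyps(1)])
  also have "\<dots> = card (SIGMA vs:extt W b j l. W - sp l vs)"
    by (rule card_image[OF extt_inj])
  also have "\<dots> = (\<Sum>vs\<in>extt W b j l. card (W - sp l vs))"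
    using fin by (simp add: card_SigmaI)
  also have "\<dots> = (\<Sum>vs\<in>extt W b j l. CARD('a) ^ m - CARD('a) ^ l)"
  proof (rule sum.cong)
    fix vs assume vs: "vs \<in> extt W b j l"
    then have "sp l vs \<subseteq> W" using sp_subset[OF W(1)] unfolding extt_def by (auto simp: PiE_def)
    then have "card (W - sp l vs) = card W - card (sp l vs)" by (simp add: card_Diff_subset)
    then show "card (W - sp l vs) = CARD('a) ^ m - CARD('a) ^ l"
      using vs W(2) card_sp[of l vs] unfolding extt_def by auto
  qed simp
  also have "\<dots> = card (extt W b j l) * (CARD('a) ^ m - CARD('a) ^ l)" by simp
  also have "\<dots> = (\<Prod>i\<in>{j..<Suc l}. CARD('a) ^ m - CARD('a) ^ i)"
    using step by (simp add: prod.op_ivl_Suc)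
  finally show ?case .
qed



lemma sub_subsp: "D \<in> Sub l \<Longrightarrow> subsp D"
  by (auto simp: Sub_def subsp_sp)

lemma sub_card: "D \<in> Sub l \<Longrightarrow> card D = CARD('a) ^ l"
  for D :: "('n \<Rightarrow> 'a::{field,finite}) set"
  by (auto simp: Sub_def card_sp)

lemma sp_in_Sub: "lin_indep l vs \<Longrightarrow> sp l vs \<in> Sub l"
  by (auto simp: Sub_def)

lemma sp_eq_sub:
  fixes D :: "('n::finite \<Rightarrow> 'a::{field,finite}) set"
  assumes "D \<in> Sub l" "lin_indep l vs" "\<And>i. i < l \<Longrightarrow> vs i \<in> D"
  shows "sp l vs = D"
proof -
  have "sp l vs \<subseteq> D" using sp_subset[OF sub_subsp[OF assms(1)]] assms(3) by blast
  moreover have "card (sp l vs) = card D" using card_sp[OF assms(2)] sub_card[OF assms(1)] by simp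
  ultimately show ?thesis by (simp add: card_subset_eq)
qed

lemma sub_eq_sub:
  fixes D :: "('n::finite \<Rightarrow> 'a::{field,finite}) set"
  assumes "D \<in> Sub l" "E \<in> Sub l" "E \<subseteq> D" shows "E = D"
  using assms sub_card[of D l] sub_card[of E l] by (simp add: card_subset_eq)

lemma card_UNIV_V: "card (UNIV :: ('n::finite \<Rightarrow> 'a::{field,finite}) set) = CARD('a) ^ CARD('n)"
  by (simp add: card_fun)

lemma subsp_UNIV: "subsp UNIV" by (simp add: subsp_def)

lemma count_sub:
  fixes b :: "nat \<Rightarrow> 'n::finite \<Rightarrow> 'a::{field,finite}"
  assumes b: "lin_indep j b" and jl: "j \<le> l" and ln: "l \<le> CARD('n)"
  shows "card {D \<in> Sub l. \<forall>i<j. b i \<in> D} * (\<Prod>i\<in>{j..<l}. CARD('a) ^ l - CARD('a) ^ i)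
         = (\<Prod>i\<in>{j..<l}. CARD('a) ^ CARD('n) - CARD('a) ^ i)"
proof -
  let ?S = "{D \<in> Sub l. \<forall>i<j. b i \<in> D} :: ('n \<Rightarrow> 'a) set set"
  let ?E = "extt UNIV b j l"
  have cE: "card ?E = (\<Prod>i\<in>{j..<l}. CARD('a) ^ CARD('n) - CARD('a) ^ i)"
    by (rule card_extt[OF subsp_UNIV card_UNIV_V b _ jl ln]) simp
  have fib: "{vs \<in> ?E. sp l vs = D} = extt D b j l" if D: "D \<in> ?S" for D
  proof
    show "{vs \<in> ?E. sp l vs = D} \<subseteq> extt D b j l"
    proof clarify
      fix vs assume vs: "vs \<in> ?E" and e: "D = sp l vs"
      then show "vs \<in> extt (sp l vs) b j l" using vs_in_sp unfolding extt_def by (auto simp: PiE_def)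
    qed
  next
    show "extt D b j l \<subseteq> {vs \<in> ?E. sp l vs = D}"
    proof
      fix vs assume vs: "vs \<in> extt D b j l"
      then have "sp l vs = D" using sp_eq_sub[of D l vs] D unfolding extt_def by (auto simp: PiE_def)
      then show "vs \<in> {vs \<in> ?E. sp l vs = D}" using vs unfolding extt_def by (auto simp: PiE_def)
    qed
  qed
  have un: "?E = (\<Union>D\<in>?S. {vs \<in> ?E. sp l vs = D})"
  proof
    show "?E \<subseteq> (\<Union>D\<in>?S. {vs \<in> ?E. sp l vs = D})"
    proof
      fix vs assume vs: "vs \<in> ?E"
      have li: "lin_indep l vs" and bi: "\<forall>i<j. vs i = b i" using vs by (auto simp: extt_def)
      have "\<forall>i<j. b i \<in> sp l vs"
      proof (intro allI impI)
        fix i assume i: "i < j"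
        then have "i < l" using jl by simp
        then show "b i \<in> sp l vs" using bi vs_in_sp[of i l vs] i by simp
      qed
      then have "sp l vs \<in> ?S" using sp_in_Sub[OF li] by blast
      then show "vs \<in> (\<Union>D\<in>?S. {vs \<in> ?E. sp l vs = D})" using vs by blast
    qed
  qed blast
  have finE: "finite ?E"
    by (rule finite_subset[of _ "PiE {..<l} (\<lambda>_. UNIV)"]) (auto simp: extt_def intro!: finite_PiE)
  have "card ?E = (\<Sum>D\<in>?S. card {vs \<in> ?E. sp l vs = D})"
    by (subst un, rule card_UN_disjoint) (auto intro: finite_subset[OF _ finE])
  also have "\<dots> = (\<Sum>D\<in>?S. card (extt D b j l))" by (rule sum.cong) (auto simp: fib)
  also have "\<dots> = (\<Sum>D\<in>?S. (\<Prod>i\<in>{j..<l}. CARD('a) ^ l - CARD('a) ^ i))"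
  proof (rule sum.cong)
    fix D assume D: "D \<in> ?S"
    show "card (extt D b j l) = (\<Prod>i\<in>{j..<l}. CARD('a) ^ l - CARD('a) ^ i)"
      using D by (intro card_extt[OF sub_subsp sub_card b _ jl]) auto
  qed simp
  finally show ?thesis using cE by simp
qed



lemma sum_ind_card: "finite A \<Longrightarrow> (\<Sum>x\<in>A. if x \<in> B then 1 else (0::real)) = real (card (A \<inter> B))"
  using sum_of_bool_eq[of A "\<lambda>x. x \<in> B", where 'a=real] unfolding of_bool_def by simp

lemma subsp_neg: "subsp U \<Longrightarrow> x \<in> U \<Longrightarrow> - x \<in> U"
  unfolding subsp_def by (metis (no_types) sm_def fun_eq_iff uminus_apply mult_minus1)

lemma subsp_diff: "subsp U \<Longrightarrow> x \<in> U \<Longrightarrow> y \<in> U \<Longrightarrow> x - y \<in> U"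
  using subsp_neg[of U y] unfolding subsp_def by (metis diff_conv_add_uminus)

lemma aff_span_tr: "aff_span k p vs = tr p (sp k vs)"
  unfolding aff_span_def tr_def sp_def lc_def by (auto simp: plus_fun_def)

lemma AK_eq: "affine_kspaces k = {tr p U | p U. U \<in> Sub k}"
  unfolding affine_kspaces_def Sub_def by (auto simp: aff_span_tr)

lemma mem_tr: "v \<in> tr p U \<longleftrightarrow> v - p \<in> U"
  unfolding tr_def by (auto intro: image_eqI[of _ _ "v - p"])

lemma dir_tr: "subsp U \<Longrightarrow> dir (tr p U) = U"
proof -
  assume U: "subsp U"
  have "a - b \<in> U" if "a \<in> tr p U" "b \<in> tr p U" for a b
    using that subsp_diff[OF U, of "a - p" "b - p"] by (simp add: mem_tr)
  moreover have "u \<in> dir (tr p U)" if "u \<in> U" for u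
  proof -
    have "p + u \<in> tr p U" "p \<in> tr p U" using that U by (auto simp: mem_tr subsp_def)
    then show ?thesis unfolding dir_def by force
  qed
  ultimately show ?thesis unfolding dir_def by blast
qed

lemma tr_eq: "subsp U \<Longrightarrow> s \<in> tr p U \<Longrightarrow> tr s U = tr p U"
proof -
  assume U: "subsp U" and s: "s \<in> tr p U"
  have "v - s \<in> U \<longleftrightarrow> v - p \<in> U" for v
  proof -
    have sp: "s - p \<in> U" using s by (simp add: mem_tr)
    have "v - p = (v - s) + (s - p)" "v - s = (v - p) - (s - p)" by simp_all
    then show ?thesis using sp U subsp_diff[OF U] unfolding subsp_def by metis
  qed
  then show ?thesis by (auto simp: mem_tr)
qed

lemma tr_disj: "subsp U \<Longrightarrow> tr p U \<inter> tr p' U \<noteq> {} \<Longrightarrow> tr p U = tr p' U"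
  using tr_eq by blast

lemma self_in_tr: "subsp U \<Longrightarrow> p \<in> tr p U"
  by (simp add: mem_tr subsp_def)

lemma card_tr: "card (tr p U) = card U"
  unfolding tr_def by (rule card_image) (simp add: inj_on_def)

lemma AK_dir:
  assumes "S \<in> affine_kspaces k"
  shows "dir S \<in> Sub k" "subsp (dir S)" "s \<in> S \<Longrightarrow> S = tr s (dir S)" "S \<noteq> {}"
proof -
  obtain p U where S: "S = tr p U" "U \<in> Sub k" using assms by (auto simp: AK_eq)
  then have U: "subsp U" by (simp add: sub_subsp)
  show "dir S \<in> Sub k" "subsp (dir S)" using S U by (simp_all add: dir_tr)
  show "s \<in> S \<Longrightarrow> S = tr s (dir S)" using S U dir_tr tr_eq by metis
  show "S \<noteq> {}" using S U self_in_tr by blast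
qed

lemma tr_in_AK: "U \<in> Sub k \<Longrightarrow> tr p U \<in> affine_kspaces k"
  by (auto simp: AK_eq)

definition cls :: "('n \<Rightarrow> 'a::field) set \<Rightarrow> ('n \<Rightarrow> 'a) set set" where
  "cls U = {tr p U | p. True}"

lemma cls_iff: "U \<in> Sub k \<Longrightarrow> S \<in> affine_kspaces k \<Longrightarrow> S \<in> cls U \<longleftrightarrow> dir S = U"
proof
  assume U: "U \<in> Sub k" and S: "S \<in> affine_kspaces k"
  {
    assume "S \<in> cls U"
    then obtain p where "S = tr p U" unfolding cls_def by blast
    then show "dir S = U" using dir_tr[OF sub_subsp[OF U]] by simp
  }
  {
    assume d: "dir S = U"
    obtain s where s: "s \<in> S" using AK_dir(4)[OF S] by blast
    have "S = tr s U" using AK_dir(3)[OF S s] d by simp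
    then show "S \<in> cls U" unfolding cls_def by blast
  }
qed

lemma cls_sub: "U \<in> Sub k \<Longrightarrow> cls U \<subseteq> affine_kspaces k"
  unfolding cls_def by (auto simp: tr_in_AK)

lemma cls_spread: "U \<in> Sub k \<Longrightarrow> spread k (cls U)"
  unfolding spread_def partial_spread_def
proof (intro conjI ballI impI)
  assume U: "U \<in> Sub k"
  then show "cls U \<subseteq> affine_kspaces k" by (rule cls_sub)
  show "S \<inter> T = {}" if "S \<in> cls U" "T \<in> cls U" "S \<noteq> T" for S T
    using that tr_disj[OF sub_subsp[OF U]] unfolding cls_def by blast
  show "\<Union> (cls U) = UNIV" using self_in_tr[OF sub_subsp[OF U]] unfolding cls_def by blast
qed

lemma cl_partial:
  fixes L :: "('n::finite \<Rightarrow> 'a::{field,finite}) set set"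
  assumes w: "\<forall>S\<in>affine_kspaces k. (if S \<in> L then 1 else 0) = (\<Sum>P\<in>S. w P)"
    and R: "partial_spread k R"
  shows "real (card (L \<inter> R)) = (\<Sum>P\<in>\<Union>R. w P)"
proof -
  have "real (card (L \<inter> R)) = (\<Sum>S\<in>R. if S \<in> L then 1 else 0)"
    using sum_ind_card[of R L] by (simp add: Int_commute)
  also have "\<dots> = (\<Sum>S\<in>R. \<Sum>P\<in>S. w P)"
  proof (rule sum.cong)
    fix S assume "S \<in> R" then have "S \<in> affine_kspaces k" using R unfolding partial_spread_def by blast
    then show "(if S \<in> L then 1 else 0) = (\<Sum>P\<in>S. w P)" using w by blast
  qed simp
  also have "\<dots> = (\<Sum>P\<in>\<Union>R. w P)" using R unfolding partial_spread_def
    by (subst sum.Union_disjoint) auto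
  finally show ?thesis .
qed

lemma card_through:
  fixes P :: "'n::finite \<Rightarrow> 'a::{field,finite}"
  shows "card {S \<in> affine_kspaces k. P \<in> S} = card (Sub k :: ('n \<Rightarrow> 'a) set set)"
proof -
  have "{S \<in> affine_kspaces k. P \<in> S} = (\<lambda>U. tr P U) ` Sub k"
  proof
    show "{S \<in> affine_kspaces k. P \<in> S} \<subseteq> (\<lambda>U. tr P U) ` Sub k"
      using AK_dir by blast
    show "(\<lambda>U. tr P U) ` Sub k \<subseteq> {S \<in> affine_kspaces k. P \<in> S}"
      using tr_in_AK self_in_tr sub_subsp by blast
  qed
  moreover have "inj_on (\<lambda>U. tr P U) (Sub k)"
    by (rule inj_onI) (metis dir_tr sub_subsp)
  ultimately show ?thesis by (simp add: card_image)
qed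



lemma q_ge2: "CARD('a::{field,finite}) \<ge> 2"
proof -
  have "{0::'a, 1} \<subseteq> UNIV" by simp
  then have "card {0::'a, 1} \<le> CARD('a)" by (rule card_mono[OF finite])
  then show ?thesis by simp
qed

lemma real_prod_diff:
  fixes Q :: nat
  assumes "\<And>i. i \<in> I \<Longrightarrow> Q ^ i \<le> Q ^ m"
  shows "real (\<Prod>i\<in>I. Q ^ m - Q ^ i) = (\<Prod>i\<in>I. real Q ^ m - real Q ^ i)"
  by (simp add: of_nat_diff assms)

lemma prod_split_pow:
  fixes Q :: real
  assumes "k \<le> m"
  shows "(\<Prod>i<k. Q ^ m - Q ^ i) = (\<Prod>i<k. Q ^ i) * (\<Prod>i<k. Q ^ (m - i) - 1)"
proof -
  have "(\<Prod>i<k. Q ^ m - Q ^ i) = (\<Prod>i<k. Q ^ i * (Q ^ (m - i) - 1))"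
  proof (rule prod.cong)
    fix i assume "i \<in> {..<k}"
    then have "m = i + (m - i)" using assms by auto
    then have "Q ^ m = Q ^ i * Q ^ (m - i)" by (metis power_add)
    then show "Q ^ m - Q ^ i = Q ^ i * (Q ^ (m - i) - 1)" by (simp add: algebra_simps)
  qed simp
  then show ?thesis by (simp add: prod.distrib)
qed

lemma card_Sub_gauss:
  assumes "k \<le> CARD('n)"
  shows "real (card (Sub k :: ('n::finite \<Rightarrow> 'a::{field,finite}) set set))
         = gauss_binom (real CARD('a)) CARD('n) k"
proof -
  define Q where "Q = real CARD('a)"
  have Q2: "Q \<ge> 2" using q_ge2[where 'a='a] unfolding Q_def by simp
  have li0: "lin_indep 0 (\<lambda>_. 0 :: 'n \<Rightarrow> 'a)" by (simp add: lin_indep_def)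
  have c: "card (Sub k :: ('n \<Rightarrow> 'a) set set) * (\<Prod>i\<in>{0..<k}. CARD('a) ^ k - CARD('a) ^ i)
         = (\<Prod>i\<in>{0..<k}. CARD('a) ^ CARD('n) - CARD('a) ^ i)"
    using count_sub[OF li0, of k] assms by simp
  have mono: "\<And>i m. i \<le> m \<Longrightarrow> CARD('a) ^ i \<le> CARD('a) ^ m"
    using q_ge2[where 'a='a] by (simp add: power_increasing)
  have "real (card (Sub k :: ('n \<Rightarrow> 'a) set set)) * (\<Prod>i<k. Q ^ k - Q ^ i) = (\<Prod>i<k. Q ^ CARD('n) - Q ^ i)"
  proof -
    have "real (card (Sub k :: ('n \<Rightarrow> 'a) set set)) * real (\<Prod>i<k. CARD('a) ^ k - CARD('a) ^ i)
        = real (\<Prod>i<k. CARD('a) ^ CARD('n) - CARD('a) ^ i)"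
      using arg_cong[where f=real, OF c] by (simp only: atLeast0LessThan of_nat_mult)
    moreover have "real (\<Prod>i<k. CARD('a) ^ k - CARD('a) ^ i) = (\<Prod>i<k. Q ^ k - Q ^ i)"
      unfolding Q_def by (rule real_prod_diff) (auto intro: mono)
    moreover have "real (\<Prod>i<k. CARD('a) ^ CARD('n) - CARD('a) ^ i) = (\<Prod>i<k. Q ^ CARD('n) - Q ^ i)"
      unfolding Q_def using assms by (intro real_prod_diff) (auto intro: mono)
    ultimately show ?thesis by simp
  qed
  moreover have "(\<Prod>i<k. Q ^ k - Q ^ i) = (\<Prod>i<k. Q ^ i) * (\<Prod>i<k. Q ^ (i + 1) - 1)"
  proof -
    have "(\<Prod>i<k. Q ^ (k - i) - 1) = (\<Prod>i<k. Q ^ (i + 1) - 1)"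
      using prod.nat_diff_reindex[of "\<lambda>i. Q ^ (i + 1) - 1" k]
      by (metis (no_types, lifting) Suc_diff_Suc Suc_eq_plus1 lessThan_iff prod.cong)
    then show ?thesis using prod_split_pow[of k k Q] by simp
  qed
  moreover have "(\<Prod>i<k. Q ^ CARD('n) - Q ^ i) = (\<Prod>i<k. Q ^ i) * (\<Prod>i<k. Q ^ (CARD('n) - i) - 1)"
    using prod_split_pow[OF assms] by simp
  moreover have "(\<Prod>i<k. Q ^ i) \<noteq> 0" using Q2 by simp
  moreover have "(\<Prod>i<k. Q ^ (i + 1) - 1) \<noteq> 0"
  proof -
    have "Q ^ (i + 1) - 1 \<noteq> 0" for i
    proof -
      have "Q ^ (i + 1) \<ge> Q" using Q2 by (intro self_le_power) auto
      then show ?thesis using Q2 by linarith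
    qed
    then show ?thesis by simp
  qed
  ultimately show ?thesis unfolding gauss_binom_def Q_def[symmetric]
    by (simp add: field_simps)
qed

lemma CL_total:
  fixes L :: "('n::finite \<Rightarrow> 'a::{field,finite}) set set"
  assumes w: "\<forall>S\<in>affine_kspaces k. (if S \<in> L then 1 else 0) = (\<Sum>P\<in>S. w P)"
    and L: "L \<subseteq> affine_kspaces k"
  shows "real (card L) = real (card (Sub k :: ('n \<Rightarrow> 'a) set set)) * (\<Sum>P\<in>UNIV. w P)"
proof -
  have "real (card L) = (\<Sum>S\<in>affine_kspaces k. if S \<in> L then 1 else 0)"
    using sum_ind_card[of "affine_kspaces k" L] L by (simp add: Int_absorb1)
  also have "\<dots> = (\<Sum>S\<in>affine_kspaces k. \<Sum>P\<in>UNIV. if P \<in> S then w P else 0)"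
    using w by (intro sum.cong) (auto simp: sum.If_cases)
  also have "\<dots> = (\<Sum>P\<in>UNIV. \<Sum>S\<in>affine_kspaces k. if P \<in> S then w P else 0)"
    by (rule sum.swap)
  also have "\<dots> = (\<Sum>P\<in>UNIV. w P * real (card {S \<in> affine_kspaces k. P \<in> S}))"
    by (intro sum.cong) (auto simp: sum.If_cases Int_def)
  also have "\<dots> = (\<Sum>P\<in>UNIV. w P * real (card (Sub k :: ('n \<Rightarrow> 'a) set set)))"
    by (simp add: card_through)
  finally show ?thesis by (simp add: sum_distrib_right mult.commute)
qed



definition NU :: "('n \<Rightarrow> 'a::field) set set \<Rightarrow> ('n \<Rightarrow> 'a) set \<Rightarrow> ('n \<Rightarrow> 'a) set \<Rightarrow> nat" where
  "NU L U H = card {T \<in> L. dir T = U \<and> T \<subseteq> H}"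

lemma sm_add: "sm a x + sm b x = sm (a + b) x"
  by (simp add: sm_def fun_eq_iff algebra_simps)

lemma sm_sm: "sm a (sm b x) = sm (a * b) x"
  by (simp add: sm_def fun_eq_iff algebra_simps)

lemma sm_one: "sm 1 x = x" by (simp add: sm_def)

lemma hyp_complement:
  fixes D :: "('n::finite \<Rightarrow> 'a::{field,finite}) set"
  assumes D: "D \<in> Sub (CARD('n) - 1)" and u: "u \<notin> D"
  shows "\<exists>a. v - sm a u \<in> D"
proof -
  obtain b where b: "lin_indep (CARD('n) - 1) b" "D = sp (CARD('n) - 1) b"
    using D by (auto simp: Sub_def)
  define m where "m = CARD('n) - 1"
  have n: "CARD('n) = Suc m" unfolding m_def using finite_UNIV_card_ge_0[where 'a='n] by simp
  define b' where "b' = b(m := u)"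
  have spb: "sp m b' = D" unfolding b'_def b(2) m_def by (rule sp_cong) simp
  have lib: "lin_indep m b'" unfolding b'_def using b(1) m_def lin_indep_cong[of m "b(m := u)" b] by simp
  have "lin_indep (Suc m) b'" using lib spb u lin_indep_Suc[of m b'] by (simp add: b'_def)
  then have "card (sp (Suc m) b') = card (UNIV :: ('n \<Rightarrow> 'a) set)"
    using card_sp card_UNIV_V n by metis
  then have "sp (Suc m) b' = UNIV" by (simp add: card_subset_eq)
  then obtain c where "v = lc (Suc m) c b'" by (metis UNIV_I imageE sp_def)
  then have "v - sm (c m) u = lc m c b'" by (simp add: lc_Suc b'_def)
  then show ?thesis using spb by (metis rangeI sp_def)
qed

lemma hyp_unique:
  fixes D :: "('n::finite \<Rightarrow> 'a::{field,finite}) set"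
  assumes D: "subsp D" and u: "u \<notin> D" and a: "v - sm a u \<in> D" and b: "v - sm b u \<in> D"
  shows "a = b"
proof (rule ccontr)
  assume ne: "a \<noteq> b"
  have "(v - sm b u) - (v - sm a u) \<in> D" using subsp_diff[OF D b a] .
  moreover have "(v - sm b u) - (v - sm a u) = sm (a - b) u" by (simp add: sm_def fun_eq_iff algebra_simps)
  ultimately have "sm (1 / (a - b)) (sm (a - b) u) \<in> D" using D unfolding subsp_def by metis
  then show False using ne u by (simp add: sm_sm sm_one)
qed

lemma coset_sum:
  fixes L :: "('n::finite \<Rightarrow> 'a::{field,finite}) set set"
  assumes L: "L \<subseteq> affine_kspaces k" and D: "D \<in> Sub (CARD('n) - 1)" and U0: "U0 \<in> Sub k" "U0 \<subseteq> D"
    and u: "u \<notin> D"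
  shows "(\<Sum>a\<in>UNIV. NU L U0 (tr (v + sm a u) D)) = card {T \<in> L. dir T = U0}"
proof -
  have sD: "subsp D" using D by (rule sub_subsp)
  let ?F = "\<lambda>a. {T \<in> L. dir T = U0 \<and> T \<subseteq> tr (v + sm a u) D}"
  have un: "{T \<in> L. dir T = U0} = (\<Union>a\<in>UNIV. ?F a)"
  proof
    show "{T \<in> L. dir T = U0} \<subseteq> (\<Union>a\<in>UNIV. ?F a)"
    proof
      fix T assume "T \<in> {T \<in> L. dir T = U0}"
      then have T: "T \<in> L" "U0 = dir T" by auto
      then have TA: "T \<in> affine_kspaces k" using L by blast
      then obtain t where t: "t \<in> T" using AK_dir(4) by blast
      have Tt: "T = tr t U0" using AK_dir(3)[OF TA t] T by simp
      obtain a where a: "(t - v) - sm a u \<in> D" using hyp_complement[OF D u] by blast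
      have "t \<in> tr (v + sm a u) D" using a by (simp add: mem_tr algebra_simps)
      then have e: "tr t D = tr (v + sm a u) D" by (rule tr_eq[OF sD])
      have "T \<subseteq> tr t D" using Tt U0(2) by (auto simp: tr_def)
      then show "T \<in> (\<Union>a\<in>UNIV. ?F a)" using T e by auto
    qed
  qed blast
  have disj: "?F a \<inter> ?F b = {}" if "a \<noteq> b" for a b
  proof (rule ccontr)
    assume "?F a \<inter> ?F b \<noteq> {}"
    then obtain T where T: "T \<in> L" "T \<subseteq> tr (v + sm a u) D" "T \<subseteq> tr (v + sm b u) D" by blast
    then obtain t where t: "t \<in> T" using AK_dir(4) L by blast
    have "(t - v) - sm a u \<in> D" "(t - v) - sm b u \<in> D" using T t by (auto simp: mem_tr algebra_simps)
    then show False using hyp_unique[OF sD u] that by blast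
  qed
  have "card {T \<in> L. dir T = U0} = (\<Sum>a\<in>UNIV. card (?F a))"
    by (subst un, rule card_UN_disjoint) (use disj in auto)
  then show ?thesis by (simp add: NU_def)
qed

lemma shift_sum:
  fixes G :: "('n::finite \<Rightarrow> 'a::{field,finite}) \<Rightarrow> real"
  assumes U: "subsp U" and a: "a \<in> U"
  shows "(\<Sum>P\<in>tr s U. G (P + a)) = (\<Sum>P\<in>tr s U. G P)"
proof -
  have "(\<lambda>P. P + a) ` tr s U = tr s U"
  proof
    show "(\<lambda>P. P + a) ` tr s U \<subseteq> tr s U"
    proof clarify
      fix P assume "P \<in> tr s U"
      then have "(P - s) + a \<in> U" using U a unfolding subsp_def by (simp add: mem_tr)
      moreover have "(P - s) + a = P + a - s" by (simp add: algebra_simps)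
      ultimately show "P + a \<in> tr s U" by (simp add: mem_tr)
    qed
    show "tr s U \<subseteq> (\<lambda>P. P + a) ` tr s U"
    proof
      fix P assume P: "P \<in> tr s U"
      have "P - a \<in> tr s U" using P subsp_diff[OF U, of "P - s" a] a by (simp add: mem_tr algebra_simps)
      then show "P \<in> (\<lambda>P. P + a) ` tr s U" by (intro image_eqI[of _ _ "P - a"]) auto
    qed
  qed
  moreover have "inj_on (\<lambda>P. P + a) (tr s U)" by (simp add: inj_on_def)
  ultimately show ?thesis using sum.reindex[of "\<lambda>P. P + a" "tr s U" G] by simp
qed



lemma zero_off:
  fixes L :: "('n::finite \<Rightarrow> 'a::{field,finite}) set set"
  assumes L: "L \<subseteq> affine_kspaces k" and D: "D \<in> Sub (CARD('n) - 1)" and U0: "U0 \<in> Sub k" "U0 \<subseteq> D"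
    and U: "subsp U" "u \<in> U" "u \<notin> D"
  shows "(\<Sum>P\<in>tr s0 U. real (NU L U0 (tr P D)) - real (card {T \<in> L. dir T = U0}) / real CARD('a)) = 0"
proof -
  define M where "M = real (card {T \<in> L. dir T = U0})"
  define Q where "Q = real CARD('a)"
  have Q: "Q > 0" unfolding Q_def by simp
  define G where "G P = real (NU L U0 (tr P D)) - M / Q" for P
  have sh: "(\<Sum>P\<in>tr s0 U. G P) = (\<Sum>P\<in>tr s0 U. G (P + sm a u))" for a
    using shift_sum[OF U(1), where a="sm a u" and s=s0 and G=G] U unfolding subsp_def by simp
  have "Q * (\<Sum>P\<in>tr s0 U. G P) = (\<Sum>a\<in>(UNIV::'a set). \<Sum>P\<in>tr s0 U. G P)"
    unfolding Q_def by simp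
  also have "\<dots> = (\<Sum>a\<in>(UNIV::'a set). \<Sum>P\<in>tr s0 U. G (P + sm a u))"
    using sh by simp
  also have "\<dots> = (\<Sum>P\<in>tr s0 U. \<Sum>a\<in>(UNIV::'a set). G (P + sm a u))"
    by (rule sum.swap)
  also have "\<dots> = (\<Sum>P\<in>tr s0 U. 0)"
  proof (rule sum.cong)
    fix P
    have "(\<Sum>a\<in>(UNIV::'a set). G (P + sm a u))
        = (\<Sum>a\<in>(UNIV::'a set). real (NU L U0 (tr (P + sm a u) D))) - Q * (M / Q)"
      unfolding G_def Q_def by (simp add: sum_subtractf)
    also have "(\<Sum>a\<in>(UNIV::'a set). real (NU L U0 (tr (P + sm a u) D))) = M"
      unfolding M_def using coset_sum[OF L D U0 U(3), of P] by (simp flip: of_nat_sum)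
    also have "M - Q * (M / Q) = 0" using Q by simp
    finally show "(\<Sum>a\<in>(UNIV::'a set). G (P + sm a u)) = 0" .
  qed simp
  finally show ?thesis using Q unfolding G_def M_def Q_def by simp
qed

definition hval :: "real \<Rightarrow> nat \<Rightarrow> nat \<Rightarrow> real" where
  "hval Q N j = (\<Prod>i\<in>{j..<N - 1}. Q ^ N - Q ^ i) / (\<Prod>i\<in>{j..<N - 1}. Q ^ (N - 1) - Q ^ i)"

lemma hcount:
  fixes b :: "nat \<Rightarrow> 'n::finite \<Rightarrow> 'a::{field,finite}"
  assumes b: "lin_indep j b" and j: "j \<le> CARD('n) - 1"
  shows "real (card {D \<in> Sub (CARD('n) - 1). \<forall>i<j. b i \<in> D}) = hval (real CARD('a)) CARD('n) j"
proof -
  have c: "card {D \<in> Sub (CARD('n) - 1). \<forall>i<j. b i \<in> D} * (\<Prod>i\<in>{j..<CARD('n) - 1}. CARD('a) ^ (CARD('n) - 1) - CARD('a) ^ i)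
         = (\<Prod>i\<in>{j..<CARD('n) - 1}. CARD('a) ^ CARD('n) - CARD('a) ^ i)"
    by (rule count_sub[OF b j]) simp
  have mono: "\<And>i m. i \<le> m \<Longrightarrow> CARD('a) ^ i \<le> CARD('a) ^ m"
    using q_ge2[where 'a='a] by (simp add: power_increasing)
  have r1: "real (\<Prod>i\<in>{j..<CARD('n) - 1}. CARD('a) ^ (CARD('n) - 1) - CARD('a) ^ i)
     = (\<Prod>i\<in>{j..<CARD('n) - 1}. real CARD('a) ^ (CARD('n) - 1) - real CARD('a) ^ i)"
    by (rule real_prod_diff) (auto intro: mono)
  have r2: "real (\<Prod>i\<in>{j..<CARD('n) - 1}. CARD('a) ^ CARD('n) - CARD('a) ^ i)
     = (\<Prod>i\<in>{j..<CARD('n) - 1}. real CARD('a) ^ CARD('n) - real CARD('a) ^ i)"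
    by (rule real_prod_diff) (auto intro: mono)
  have nz: "(\<Prod>i\<in>{j..<CARD('n) - 1}. real CARD('a) ^ (CARD('n) - 1) - real CARD('a) ^ i) \<noteq> 0"
  proof -
    have "real CARD('a) ^ i < real CARD('a) ^ (CARD('n) - 1)" if "i < CARD('n) - 1" for i
      using that q_ge2[where 'a='a] by (intro power_strict_increasing) auto
    then have "\<forall>i\<in>{j..<CARD('n) - 1}. real CARD('a) ^ (CARD('n) - 1) - real CARD('a) ^ i \<noteq> 0"
      by (metis atLeastLessThan_iff less_irrefl eq_iff_diff_eq_0)
    then show ?thesis by (simp add: prod_zero_iff)
  qed
  show ?thesis using arg_cong[where f=real, OF c] r1 r2 nz unfolding hval_def
    by (simp add: field_simps)
qed

lemma hval_ne:
  assumes Q: "Q \<ge> 2" and j: "j + 1 \<le> N - 1"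
  shows "hval Q N j \<noteq> hval Q N (j + 1)"
proof
  assume e: "hval Q N j = hval Q N (j + 1)"
  define A where "A = (\<Prod>i\<in>{Suc j..<N - 1}. Q ^ N - Q ^ i)"
  define B where "B = (\<Prod>i\<in>{Suc j..<N - 1}. Q ^ (N - 1) - Q ^ i)"
  have pos: "Q ^ i < Q ^ m" if "i < m" for i m using that Q by (intro power_strict_increasing) auto
  have "\<forall>i\<in>{Suc j..<N - 1}. Q ^ N - Q ^ i \<noteq> 0"
  proof
    fix i assume "i \<in> {Suc j..<N - 1}"
    then have "i < N" by auto
    then show "Q ^ N - Q ^ i \<noteq> 0" using pos[of i N] by simp
  qed
  then have A: "A \<noteq> 0" unfolding A_def by (simp add: prod_zero_iff)
  have "\<forall>i\<in>{Suc j..<N - 1}. Q ^ (N - 1) - Q ^ i \<noteq> 0"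
    using pos by (metis atLeastLessThan_iff less_irrefl eq_iff_diff_eq_0)
  then have B: "B \<noteq> 0" unfolding B_def by (simp add: prod_zero_iff)
  have b: "Q ^ (N - 1) - Q ^ j \<noteq> 0" using pos[of j "N - 1"] j by simp
  have "hval Q N j = (A * (Q ^ N - Q ^ j)) / (B * (Q ^ (N - 1) - Q ^ j))"
    unfolding hval_def A_def B_def using j by (simp add: prod.atLeast_Suc_lessThan mult.commute)
  moreover have "hval Q N (j + 1) = A / B" unfolding hval_def A_def B_def by simp
  ultimately have "A * (Q ^ N - Q ^ j) * B = A * B * (Q ^ (N - 1) - Q ^ j)"
    using e A B b by (simp add: field_simps)
  then have "Q ^ N = Q ^ (N - 1)" using A B by (simp add: algebra_simps)
  then show False using pos[of "N - 1" N] j by simp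
qed



lemma sp_sub_iff: "subsp D \<Longrightarrow> sp k b \<subseteq> D \<longleftrightarrow> (\<forall>i<k. b i \<in> D)"
  using sp_subset[of D k b] vs_in_sp[of _ k b] by blast

lemma tr_mono: "U \<subseteq> D \<Longrightarrow> tr p U \<subseteq> tr p D"
  unfolding tr_def by blast

lemma sub_in_tr:
  assumes D: "subsp D" and UD: "U \<subseteq> D" and sU: "subsp U" and T: "T = tr t U"
  shows "T \<subseteq> tr s D \<longleftrightarrow> t - s \<in> D"
proof
  assume "T \<subseteq> tr s D"
  moreover have "t \<in> T" using T self_in_tr[OF sU, of t] by simp
  ultimately show "t - s \<in> D" by (auto simp: mem_tr)
next
  assume "t - s \<in> D"
  then have "tr t D = tr s D" using tr_eq[OF D] by (simp add: mem_tr)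
  then show "T \<subseteq> tr s D" using T tr_mono[OF UD] by metis
qed

lemma count_T:
  fixes U :: "('n::finite \<Rightarrow> 'a::{field,finite}) set"
  assumes U: "U \<in> Sub k" and kn: "k + 1 \<le> CARD('n) - 1"
  shows "real (card {D \<in> Sub (CARD('n) - 1). U \<subseteq> D \<and> tr t U \<subseteq> tr s D})
       = (if tr t U = tr s U then hval (real CARD('a)) CARD('n) k else hval (real CARD('a)) CARD('n) (k + 1))"
proof -
  obtain b where b: "lin_indep k b" "U = sp k b" using U by (auto simp: Sub_def)
  have sU: "subsp U" using U by (rule sub_subsp)
  have e1: "{D \<in> Sub (CARD('n) - 1). U \<subseteq> D \<and> tr t U \<subseteq> tr s D} = {D \<in> Sub (CARD('n) - 1). U \<subseteq> D \<and> t - s \<in> D}"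
  proof -
    have "U \<subseteq> D \<and> tr t U \<subseteq> tr s D \<longleftrightarrow> U \<subseteq> D \<and> t - s \<in> D" if "D \<in> Sub (CARD('n) - 1)" for D
      using sub_in_tr[OF sub_subsp[OF that] _ sU refl, of t s] by blast
    then show ?thesis by blast
  qed
  show ?thesis
  proof (cases "tr t U = tr s U")
    case True
    then have "t - s \<in> U" using self_in_tr[OF sU, of t] by (simp add: mem_tr)
    then have "{D \<in> Sub (CARD('n) - 1). U \<subseteq> D \<and> t - s \<in> D} = {D \<in> Sub (CARD('n) - 1). \<forall>i<k. b i \<in> D}"
      using sp_sub_iff sub_subsp b(2) by blast
    then show ?thesis using True e1 hcount[OF b(1)] kn by simp
  next
    case False
    have nt: "t - s \<notin> U"
    proof
      assume "t - s \<in> U"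
      then have "t \<in> tr s U" by (simp add: mem_tr)
      then have "tr t U = tr s U" by (rule tr_eq[OF sU])
      then show False using False by simp
    qed
    define b' where "b' = b(k := t - s)"
    have c1: "lin_indep k b' = lin_indep k b" unfolding b'_def by (rule lin_indep_cong) simp
    have c2: "sp k b' = sp k b" unfolding b'_def by (rule sp_cong) simp
    have li: "lin_indep (Suc k) b'" using lin_indep_Suc[of k b'] c1 c2 b nt by (simp add: b'_def)
    have "{D \<in> Sub (CARD('n) - 1). U \<subseteq> D \<and> t - s \<in> D} = {D \<in> Sub (CARD('n) - 1). \<forall>i<Suc k. b' i \<in> D}"
    proof -
      have "U \<subseteq> D \<and> t - s \<in> D \<longleftrightarrow> (\<forall>i<Suc k. b' i \<in> D)" if "subsp D" for D
        using sp_sub_iff[OF that, of k b] b(2) unfolding b'_def by (auto simp: less_Suc_eq)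
      then show ?thesis using sub_subsp by blast
    qed
    then show ?thesis using False e1 hcount[OF li] kn by simp
  qed
qed

lemma dc:
  fixes L :: "('n::finite \<Rightarrow> 'a::{field,finite}) set set"
  assumes L: "L \<subseteq> affine_kspaces k" and U: "U \<in> Sub k" and kn: "k + 1 \<le> CARD('n) - 1"
  shows "(\<Sum>D\<in>{D \<in> Sub (CARD('n) - 1). U \<subseteq> D}. real (NU L U (tr s D)))
       = hval (real CARD('a)) CARD('n) k * (if tr s U \<in> L then 1 else 0)
         + hval (real CARD('a)) CARD('n) (k + 1) * (real (card {T \<in> L. dir T = U}) - (if tr s U \<in> L then 1 else 0))"
proof -
  let ?HU = "{D \<in> Sub (CARD('n) - 1). U \<subseteq> D}"
  let ?LU = "{T \<in> L. dir T = U}"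
  let ?S = "tr s U"
  define h0 where "h0 = hval (real CARD('a)) CARD('n) k"
  define h1 where "h1 = hval (real CARD('a)) CARD('n) (k + 1)"
  have sU: "subsp U" using U by (rule sub_subsp)
  have "(\<Sum>D\<in>?HU. real (NU L U (tr s D))) = (\<Sum>D\<in>?HU. \<Sum>T\<in>?LU. if T \<subseteq> tr s D then 1 else (0::real))"
  proof (rule sum.cong)
    fix D :: "('n \<Rightarrow> 'a) set"
    have "{T \<in> L. dir T = U \<and> T \<subseteq> tr s D} = ?LU \<inter> {T. T \<subseteq> tr s D}" by blast
    then show "real (NU L U (tr s D)) = (\<Sum>T\<in>?LU. if T \<subseteq> tr s D then 1 else (0::real))"
      unfolding NU_def using sum_ind_card[of ?LU "{T. T \<subseteq> tr s D}"] by simp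
  qed simp
  also have "\<dots> = (\<Sum>T\<in>?LU. \<Sum>D\<in>?HU. if T \<subseteq> tr s D then 1 else (0::real))"
    by (rule sum.swap)
  also have "\<dots> = (\<Sum>T\<in>?LU. if T = ?S then h0 else h1)"
  proof (rule sum.cong)
    fix T :: "('n \<Rightarrow> 'a) set" assume T: "T \<in> ?LU"
    then have TA: "T \<in> affine_kspaces k" using L by blast
    obtain t where t: "t \<in> T" using AK_dir(4)[OF TA] by blast
    have Tt: "T = tr t U" using AK_dir(3)[OF TA t] T by simp
    have "(\<Sum>D\<in>?HU. if T \<subseteq> tr s D then 1 else (0::real)) = real (card (?HU \<inter> {D. T \<subseteq> tr s D}))"
      using sum_ind_card[of ?HU "{D. T \<subseteq> tr s D}"] by simp
    also have "?HU \<inter> {D. T \<subseteq> tr s D} = {D \<in> Sub (CARD('n) - 1). U \<subseteq> D \<and> tr t U \<subseteq> tr s D}"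
      using Tt by blast
    finally show "(\<Sum>D\<in>?HU. if T \<subseteq> tr s D then 1 else (0::real)) = (if T = ?S then h0 else h1)"
      using count_T[OF U kn, of t s] Tt unfolding h0_def h1_def by simp
  qed simp
  also have "\<dots> = (\<Sum>T\<in>?LU. h1 + (if T = ?S then h0 - h1 else 0))"
    by (rule sum.cong) auto
  also have "\<dots> = h1 * real (card ?LU) + (if ?S \<in> ?LU then h0 - h1 else 0)"
    by (simp add: sum.distrib)
  also have "(?S \<in> ?LU) = (?S \<in> L)" using dir_tr[OF sU] by simp
  finally show ?thesis unfolding h0_def[symmetric] h1_def[symmetric] by (simp add: algebra_simps)
qed



lemma exists_UD:
  fixes D :: "('n::finite \<Rightarrow> 'a::{field,finite}) set"
  assumes D: "D \<in> Sub (CARD('n) - 1)" and k: "k \<le> CARD('n) - 1"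
  shows "\<exists>U. U \<in> Sub k \<and> U \<subseteq> D"
proof -
  obtain b where b: "lin_indep (CARD('n) - 1) b" "D = sp (CARD('n) - 1) b" using D by (auto simp: Sub_def)
  have "sp k b \<in> Sub k" using lin_indep_mono[OF b(1) k] by (rule sp_in_Sub)
  moreover have "sp k b \<subseteq> D" using b(2) sp_sub_iff[OF subsp_sp, of k b "CARD('n) - 1" b] vs_in_sp k by auto
  ultimately show ?thesis by blast
qed

lemma suff:
  fixes L :: "('n::finite \<Rightarrow> 'a::{field,finite}) set set"
  assumes L: "L \<subseteq> affine_kspaces k" and kn: "k + 2 \<le> CARD('n)"
    and Mc: "\<forall>U\<in>Sub k. card {T \<in> L. dir T = U} = M"
    and Hc: "\<forall>D\<in>Sub (CARD('n) - 1). \<forall>p. \<forall>U\<in>Sub k. \<forall>U'\<in>Sub k. U \<subseteq> D \<longrightarrow> U' \<subseteq> D \<longrightarrow>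
               NU L U (tr p D) = NU L U' (tr p D)"
  shows "cameron_liebler k L"
proof -
  define Hyp where "Hyp = (Sub (CARD('n) - 1) :: ('n \<Rightarrow> 'a) set set)"
  define Q where "Q = real CARD('a)"
  have Q: "Q \<ge> 2" unfolding Q_def using q_ge2[where 'a='a] by simp
  define UD where "UD D = (SOME U. U \<in> Sub k \<and> U \<subseteq> D)" for D :: "('n \<Rightarrow> 'a) set"
  have UD: "UD D \<in> Sub k \<and> UD D \<subseteq> D" if "D \<in> Hyp" for D
    unfolding UD_def using someI_ex[OF exists_UD[of D k]] that kn unfolding Hyp_def by simp
  define h0 where "h0 = hval Q CARD('n) k"
  define h1 where "h1 = hval Q CARD('n) (k + 1)"
  have hne: "h0 - h1 \<noteq> 0" unfolding h0_def h1_def using hval_ne[OF Q, of k "CARD('n)"] kn by simp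
  define G where "G D P = real (NU L (UD D) (tr P D)) - real M / Q" for D P
  define c0 where "c0 = - (h1 * real M - h0 * real M / Q) / (Q ^ k * (h0 - h1))"
  define \<alpha> where "\<alpha> = 1 / (Q ^ k * (h0 - h1))"
  define w where "w P = c0 + \<alpha> * (\<Sum>D\<in>Hyp. G D P)" for P
  show ?thesis unfolding cameron_liebler_def
  proof (intro exI[of _ w] ballI)
    fix S :: "('n \<Rightarrow> 'a) set" assume SA: "S \<in> affine_kspaces k"
    define U where "U = dir S"
    have U: "U \<in> Sub k" "subsp U" using AK_dir[OF SA] unfolding U_def by auto
    obtain s where s: "s \<in> S" using AK_dir(4)[OF SA] by blast
    have Ss: "S = tr s U" using AK_dir(3)[OF SA s] unfolding U_def .
    have cU: "card U = CARD('a) ^ k" by (rule sub_card) (rule U(1))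
    have cS: "real (card S) = Q ^ k" using Ss card_tr[of s U] cU unfolding Q_def by simp
    define f where "f = (if S \<in> L then 1 else (0::real))"
    let ?HU = "{D \<in> Hyp. U \<subseteq> D}"
    have part_in: "(\<Sum>P\<in>S. G D P) = Q ^ k * (real (NU L U (tr s D)) - real M / Q)" if D: "D \<in> ?HU" for D
    proof -
      have sD: "subsp D" using D unfolding Hyp_def by (auto intro: sub_subsp)
      have "G D P = real (NU L U (tr s D)) - real M / Q" if P: "P \<in> S" for P
      proof -
        have "P \<in> tr s D" using P Ss tr_mono[of U D s] D by auto
        then have "tr P D = tr s D" by (rule tr_eq[OF sD])
        moreover have "NU L (UD D) (tr s D) = NU L U (tr s D)"
          using Hc UD[of D] D U unfolding Hyp_def by blast
        ultimately show ?thesis unfolding G_def by simp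
      qed
      then have "(\<Sum>P\<in>S. G D P) = (\<Sum>P\<in>S. real (NU L U (tr s D)) - real M / Q)" by (rule sum.cong[OF refl])
      also have "\<dots> = real (card S) * (real (NU L U (tr s D)) - real M / Q)" by simp
      finally show ?thesis using cS by simp
    qed
    have part_out: "(\<Sum>P\<in>S. G D P) = 0" if D: "D \<in> Hyp - ?HU" for D
    proof -
      obtain u where u: "u \<in> U" "u \<notin> D" using D by blast
      have DH: "D \<in> Sub (CARD('n) - 1)" using D unfolding Hyp_def by blast
      have "(\<Sum>P\<in>tr s U. real (NU L (UD D) (tr P D)) - real (card {T \<in> L. dir T = UD D}) / real CARD('a)) = 0"
        using zero_off[OF L DH _ _ U(2) u] UD[of D] D by blast
      then show ?thesis using Mc UD[of D] D Ss unfolding G_def Q_def by simp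
    qed
    have "(\<Sum>D\<in>Hyp. \<Sum>P\<in>S. G D P) = (\<Sum>D\<in>?HU. \<Sum>P\<in>S. G D P) + (\<Sum>D\<in>Hyp - ?HU. \<Sum>P\<in>S. G D P)"
    proof -
      have "?HU \<subseteq> Hyp" by blast
      from sum.subset_diff[OF this, of "\<lambda>D. \<Sum>P\<in>S. G D P"] show ?thesis by (simp add: add.commute)
    qed
    also have "(\<Sum>D\<in>Hyp - ?HU. \<Sum>P\<in>S. G D P) = 0" using part_out by simp
    also have "(\<Sum>D\<in>?HU. \<Sum>P\<in>S. G D P) = (\<Sum>D\<in>?HU. Q ^ k * (real (NU L U (tr s D)) - real M / Q))"
      using part_in by (rule sum.cong[OF refl])
    also have "\<dots> = Q ^ k * (\<Sum>D\<in>?HU. real (NU L U (tr s D)) - real M / Q)"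
      by (rule sum_distrib_left[symmetric])
    also have "(\<Sum>D\<in>?HU. real (NU L U (tr s D)) - real M / Q) = (\<Sum>D\<in>?HU. real (NU L U (tr s D))) - real (card ?HU) * (real M / Q)"
      by (simp add: sum_subtractf)
    also have "(\<Sum>D\<in>?HU. real (NU L U (tr s D))) = h0 * f + h1 * (real M - f)"
      using dc[OF L U(1), of s] kn Mc U(1) Ss unfolding Hyp_def h0_def h1_def f_def Q_def by simp
    also have "real (card ?HU) = h0"
    proof -
      obtain b where b: "lin_indep k b" "U = sp k b" using U(1) by (auto simp: Sub_def)
      have "?HU = {D \<in> Sub (CARD('n) - 1). \<forall>i<k. b i \<in> D}"
        unfolding Hyp_def using sp_sub_iff sub_subsp b(2) by blast
      then show ?thesis using hcount[OF b(1)] kn unfolding h0_def Q_def by simp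
    qed
    finally have K: "(\<Sum>D\<in>Hyp. \<Sum>P\<in>S. G D P) = Q ^ k * (h0 * f + h1 * (real M - f) - h0 * (real M / Q))"
      by simp
    have "(\<Sum>P\<in>S. w P) = real (card S) * c0 + \<alpha> * (\<Sum>P\<in>S. \<Sum>D\<in>Hyp. G D P)"
      unfolding w_def by (simp add: sum.distrib sum_distrib_left)
    also have "(\<Sum>P\<in>S. \<Sum>D\<in>Hyp. G D P) = (\<Sum>D\<in>Hyp. \<Sum>P\<in>S. G D P)" by (rule sum.swap)
    also note K
    also note cS
    also have "Q ^ k * c0 + \<alpha> * (Q ^ k * (h0 * f + h1 * (real M - f) - h0 * (real M / Q))) = f"
    proof -
      have Qk: "Q ^ k \<noteq> 0" using Q by simp
      have Q0: "Q \<noteq> 0" using Q by simp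
      define X where "X = h1 * real M - h0 * real M / Q"
      define Y where "Y = h0 * f + h1 * (real M - f) - h0 * (real M / Q)"
      define Dn where "Dn = Q ^ k * (h0 - h1)"
      have Dn: "Dn \<noteq> 0" unfolding Dn_def using Qk hne by simp
      have c0': "c0 = - X / Dn" unfolding c0_def X_def Dn_def by simp
      have a': "\<alpha> = 1 / Dn" unfolding \<alpha>_def Dn_def by simp
      have "Q ^ k * c0 + \<alpha> * (Q ^ k * Y) = (Q ^ k * Y - Q ^ k * X) / Dn"
        unfolding c0' a' by (simp add: diff_divide_distrib)
      also have "Q ^ k * Y - Q ^ k * X = Dn * f"
        unfolding X_def Y_def Dn_def by (simp add: algebra_simps)
      also have "Dn * f / Dn = f" using Dn by simp
      finally show ?thesis unfolding Y_def .
    qed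
    finally show "(if S \<in> L then 1 else 0) = (\<Sum>P\<in>S. w P)" unfolding f_def by simp
  qed
qed



lemma Sub_card_pos:
  assumes "k \<le> CARD('n)"
  shows "card (Sub k :: ('n::finite \<Rightarrow> 'a::{field,finite}) set set) > 0"
proof -
  have li0: "lin_indep 0 (\<lambda>_. 0 :: 'n \<Rightarrow> 'a)" by (simp add: lin_indep_def)
  have c: "card (Sub k :: ('n \<Rightarrow> 'a) set set) * (\<Prod>i\<in>{0..<k}. CARD('a) ^ k - CARD('a) ^ i)
         = (\<Prod>i\<in>{0..<k}. CARD('a) ^ CARD('n) - CARD('a) ^ i)"
    using count_sub[OF li0, of k] assms by simp
  have "CARD('a) ^ i < CARD('a) ^ CARD('n)" if "i < k" for i
    using that assms q_ge2[where 'a='a] by (intro power_strict_increasing) auto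
  then have "\<forall>i\<in>{0..<k}. CARD('a) ^ CARD('n) - CARD('a) ^ i \<noteq> 0"
    by (metis atLeastLessThan_iff zero_less_diff less_numeral_extra(3))
  then have "(\<Prod>i\<in>{0..<k}. CARD('a) ^ CARD('n) - CARD('a) ^ i) \<noteq> 0"
    by (simp only: prod_zero_iff finite_atLeastLessThan) blast
  then show ?thesis using c by (metis gr0I mult_is_0)
qed

lemma partial_sub: "partial_spread k R \<Longrightarrow> R' \<subseteq> R \<Longrightarrow> partial_spread k R'"
  unfolding partial_spread_def by blast

lemma LU_eq: "L \<subseteq> affine_kspaces k \<Longrightarrow> U \<in> Sub k \<Longrightarrow> {T \<in> L. dir T = U} = L \<inter> cls U"
  using cls_iff by blast

definition cin :: "('n \<Rightarrow> 'a::field) set \<Rightarrow> ('n \<Rightarrow> 'a) set \<Rightarrow> ('n \<Rightarrow> 'a) set set" where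
  "cin V H = {T \<in> cls V. T \<subseteq> H}"

definition cout :: "('n \<Rightarrow> 'a::field) set \<Rightarrow> ('n \<Rightarrow> 'a) set \<Rightarrow> ('n \<Rightarrow> 'a) set set" where
  "cout V H = {T \<in> cls V. T \<inter> H = {}}"

lemma NU_cin: "L \<subseteq> affine_kspaces k \<Longrightarrow> V \<in> Sub k \<Longrightarrow> NU L V H = card (L \<inter> cin V H)"
proof -
  assume L: "L \<subseteq> affine_kspaces k" and V: "V \<in> Sub k"
  have "{T \<in> L. dir T = V \<and> T \<subseteq> H} = L \<inter> cin V H"
    unfolding cin_def using cls_iff[OF V] L by blast
  then show ?thesis by (simp add: NU_def)
qed

lemma dichot:
  assumes D: "subsp D" and VD: "V \<subseteq> D" and V: "subsp V" and T: "T \<in> cls V"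
  shows "T \<subseteq> tr p D \<or> T \<inter> tr p D = {}"
proof -
  obtain t where t: "T = tr t V" using T unfolding cls_def by blast
  show ?thesis
  proof (cases "t \<in> tr p D")
    case True
    then have "tr t D = tr p D" by (rule tr_eq[OF D])
    then show ?thesis using t tr_mono[OF VD, of t] by auto
  next
    case False
    have "T \<inter> tr p D = {}"
    proof (rule ccontr)
      assume "T \<inter> tr p D \<noteq> {}"
      then have "tr t D \<inter> tr p D \<noteq> {}" using t tr_mono[OF VD, of t] by blast
      then have "tr t D = tr p D" by (rule tr_disj[OF D])
      then show False using False self_in_tr[OF D, of t] by simp
    qed
    then show ?thesis by blast
  qed
qed

lemma cin_cover:
  assumes D: "subsp D" and VD: "V \<subseteq> D" and V: "subsp V" and v: "v \<in> tr p D"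
  shows "v \<in> \<Union> (cin V (tr p D))"
proof -
  have "tr v D = tr p D" using tr_eq[OF D v] .
  then have "tr v V \<subseteq> tr p D" using tr_mono[OF VD, of v] by simp
  then show ?thesis unfolding cin_def cls_def using self_in_tr[OF V, of v] by blast
qed

lemma cin_union:
  assumes D: "subsp D" and VD: "V \<subseteq> D" and V: "subsp V"
  shows "\<Union> (cin V (tr p D)) = tr p D"
  using cin_cover[OF assms] unfolding cin_def by blast

lemma spread_to_CL:
  fixes L :: "('n::finite \<Rightarrow> 'a::{field,finite}) set set"
  assumes L: "L \<subseteq> affine_kspaces k" and kn: "k + 2 \<le> CARD('n)"
    and sp: "\<forall>S. spread k S \<longrightarrow> card (L \<inter> S) = x"
  shows "cameron_liebler k L"
proof (rule suff[OF L kn])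
  show "\<forall>U\<in>Sub k. card {T \<in> L. dir T = U} = x"
  proof
    fix U :: "('n \<Rightarrow> 'a) set" assume U: "U \<in> Sub k"
    show "card {T \<in> L. dir T = U} = x" using sp cls_spread[OF U] LU_eq[OF L U] by simp
  qed
  show "\<forall>D\<in>Sub (CARD('n) - 1). \<forall>p. \<forall>U\<in>Sub k. \<forall>U'\<in>Sub k. U \<subseteq> D \<longrightarrow> U' \<subseteq> D \<longrightarrow>
               NU L U (tr p D) = NU L U' (tr p D)"
  proof (intro ballI allI impI)
    fix D :: "('n \<Rightarrow> 'a) set" and p :: "('n \<Rightarrow> 'a)" and U U' :: "('n \<Rightarrow> 'a) set" assume D: "D \<in> Sub (CARD('n) - 1)" and U: "U \<in> Sub k" and U': "U' \<in> Sub k"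
      and UD: "U \<subseteq> D" and UD': "U' \<subseteq> D"
    let ?H = "tr p D"
    have sD: "subsp D" using D by (rule sub_subsp)
    have sU: "subsp U" using U by (rule sub_subsp)
    have sU': "subsp U'" using U' by (rule sub_subsp)
    have fin: "finite X" for X :: "('n \<Rightarrow> 'a) set set" by simp
    have ne: "T \<noteq> {}" if "T \<in> cls V" "V \<in> Sub k" for T V
      using that cls_sub AK_dir(4) by blast
    have e1: "cls U = cin U ?H \<union> cout U ?H" unfolding cin_def cout_def using dichot[OF sD UD sU] by blast
    have d1: "cin V ?H \<inter> cout U ?H = {}" if "V \<in> Sub k" for V
      unfolding cin_def cout_def using ne[of _ V] that by blast
    define S2 where "S2 = cin U' ?H \<union> cout U ?H"
    have "spread k S2"
      unfolding spread_def partial_spread_def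
    proof (intro conjI ballI impI)
      show "S2 \<subseteq> affine_kspaces k" unfolding S2_def cin_def cout_def using cls_sub U U' by blast
      fix S T :: "('n \<Rightarrow> 'a) set" assume S: "S \<in> S2" and T: "T \<in> S2" and ST: "S \<noteq> T"
      have c1: "S \<inter> T = {}" if "S \<in> cls V" "T \<in> cls V" "V \<in> Sub k" for V
        using that cls_spread[OF that(3)] ST unfolding spread_def partial_spread_def by blast
      show "S \<inter> T = {}"
        using S T c1[OF _ _ U] c1[OF _ _ U'] unfolding S2_def cin_def cout_def by blast
    next
      show "\<Union> S2 = UNIV"
      proof (rule set_eqI, rule iffI)
        fix v :: "'n \<Rightarrow> 'a" assume "v \<in> UNIV"
        show "v \<in> \<Union> S2"
        proof (cases "v \<in> ?H")
          case True then show ?thesis using cin_cover[OF sD UD' sU'] unfolding S2_def by blast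
        next
          case False
          have "tr v U \<in> cls U" unfolding cls_def by blast
          then have "tr v U \<inter> ?H = {}" using dichot[OF sD UD sU] self_in_tr[OF sU, of v] False by blast
          then show ?thesis unfolding S2_def cout_def cls_def using self_in_tr[OF sU, of v] by blast
        qed
      qed simp
    qed
    then have "card (L \<inter> S2) = x" using sp by blast
    moreover have "card (L \<inter> cls U) = x" using sp cls_spread[OF U] by blast
    moreover have "card (L \<inter> S2) = card (L \<inter> cin U' ?H) + card (L \<inter> cout U ?H)"
    proof -
      have "L \<inter> S2 = (L \<inter> cin U' ?H) \<union> (L \<inter> cout U ?H)" unfolding S2_def by blast
      moreover have "(L \<inter> cin U' ?H) \<inter> (L \<inter> cout U ?H) = {}" using d1[OF U'] by blast
      ultimately show ?thesis by (simp add: card_Un_disjoint)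
    qed
    moreover have "card (L \<inter> cls U) = card (L \<inter> cin U ?H) + card (L \<inter> cout U ?H)"
    proof -
      have "L \<inter> cls U = (L \<inter> cin U ?H) \<union> (L \<inter> cout U ?H)" using e1 by blast
      moreover have "(L \<inter> cin U ?H) \<inter> (L \<inter> cout U ?H) = {}" using d1[OF U] by blast
      ultimately show ?thesis by (simp add: card_Un_disjoint)
    qed
    ultimately have "card (L \<inter> cin U ?H) = card (L \<inter> cin U' ?H)" by simp
    then show "NU L U ?H = NU L U' ?H" using NU_cin[OF L U] NU_cin[OF L U'] by simp
  qed
qed

lemma switch_to_CL:
  fixes L :: "('n::finite \<Rightarrow> 'a::{field,finite}) set set"
  assumes L: "L \<subseteq> affine_kspaces k" and kn: "k + 2 \<le> CARD('n)"
    and sw: "\<forall>R R'. conj_switching k R R' \<longrightarrow> card (L \<inter> R) = card (L \<inter> R')"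
  shows "cameron_liebler k L"
proof -
  have "card (Sub k :: ('n \<Rightarrow> 'a) set set) > 0" by (rule Sub_card_pos) (use kn in simp)
  then have "Sub k \<noteq> ({} :: ('n \<Rightarrow> 'a) set set)" by (metis card.empty less_irrefl)
  then obtain U0 :: "('n \<Rightarrow> 'a) set" where U0: "U0 \<in> Sub k" by blast
  have dis: "cls U \<inter> cls V = {}" if "U \<in> Sub k" "V \<in> Sub k" "U \<noteq> V" for U V
    using that cls_iff cls_sub by blast
  show ?thesis
  proof (rule suff[OF L kn])
    show "\<forall>U\<in>Sub k. card {T \<in> L. dir T = U} = card {T \<in> L. dir T = U0}"
    proof
      fix U :: "('n \<Rightarrow> 'a) set" assume U: "U \<in> Sub k"
      show "card {T \<in> L. dir T = U} = card {T \<in> L. dir T = U0}"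
      proof (cases "U = U0")
        case False
        have "conj_switching k (cls U) (cls U0)"
          unfolding conj_switching_def using cls_spread[OF U] cls_spread[OF U0] dis[OF U U0 False]
          unfolding spread_def by simp
        then show ?thesis using sw LU_eq[OF L U] LU_eq[OF L U0] by simp
      qed simp
    qed
    show "\<forall>D\<in>Sub (CARD('n) - 1). \<forall>p. \<forall>U\<in>Sub k. \<forall>U'\<in>Sub k. U \<subseteq> D \<longrightarrow> U' \<subseteq> D \<longrightarrow>
               NU L U (tr p D) = NU L U' (tr p D)"
    proof (intro ballI allI impI)
      fix D :: "('n \<Rightarrow> 'a) set" and p :: "('n \<Rightarrow> 'a)" and U U' :: "('n \<Rightarrow> 'a) set" assume D: "D \<in> Sub (CARD('n) - 1)" and U: "U \<in> Sub k" and U': "U' \<in> Sub k"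
        and UD: "U \<subseteq> D" and UD': "U' \<subseteq> D"
      have sD: "subsp D" using D by (rule sub_subsp)
      show "NU L U (tr p D) = NU L U' (tr p D)"
      proof (cases "U = U'")
        case False
        have ps: "partial_spread k (cin V (tr p D))" if "V \<in> Sub k" for V
          using partial_sub[of k "cls V" "cin V (tr p D)"] cls_spread[OF that]
          unfolding spread_def cin_def by blast
        have "conj_switching k (cin U (tr p D)) (cin U' (tr p D))"
          unfolding conj_switching_def
          using ps[OF U] ps[OF U'] dis[OF U U' False]
            cin_union[OF sD UD sub_subsp[OF U]] cin_union[OF sD UD' sub_subsp[OF U']]
          unfolding cin_def by blast
        then show ?thesis using sw NU_cin[OF L U] NU_cin[OF L U'] by simp
      qed simp
    qed
  qed
qed



lemma CL_W:
  fixes L :: "('n::finite \<Rightarrow> 'a::{field,finite}) set set"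
  assumes L: "L \<subseteq> affine_kspaces k" and kn: "k \<le> CARD('n)"
    and cardL: "real (card L) = real x * gauss_binom (real CARD('a)) CARD('n) k"
    and w: "\<forall>S\<in>affine_kspaces k. (if S \<in> L then 1 else 0) = (\<Sum>P\<in>S. w P)"
  shows "(\<Sum>P\<in>UNIV. w P) = real x"
proof -
  define r where "r = real (card (Sub k :: ('n \<Rightarrow> 'a) set set))"
  have g: "r = gauss_binom (real CARD('a)) CARD('n) k" unfolding r_def by (rule card_Sub_gauss[OF kn])
  have "card (Sub k :: ('n \<Rightarrow> 'a) set set) > 0" by (rule Sub_card_pos[OF kn])
  then have "r > 0" unfolding r_def by (simp only: of_nat_0_less_iff)
  then have r0: "r \<noteq> 0" by simp
  have "r * (\<Sum>P\<in>UNIV. w P) = real x * r"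
    using CL_total[OF w L] cardL g unfolding r_def by (auto simp: mult.commute)
  then show ?thesis using r0 by (simp add: mult.commute)
qed

lemma CL_spread:
  fixes L :: "('n::finite \<Rightarrow> 'a::{field,finite}) set set"
  assumes L: "L \<subseteq> affine_kspaces k" and kn: "k \<le> CARD('n)"
    and cardL: "real (card L) = real x * gauss_binom (real CARD('a)) CARD('n) k"
    and cl: "cameron_liebler k L"
  shows "\<forall>S. spread k S \<longrightarrow> card (L \<inter> S) = x"
proof (intro allI impI)
  fix S :: "('n \<Rightarrow> 'a) set set" assume S: "spread k S"
  obtain w :: "('n \<Rightarrow> 'a) \<Rightarrow> real" where w: "\<forall>S\<in>affine_kspaces k. (if S \<in> L then 1 else 0) = (\<Sum>P\<in>S. w P)"
    using cl unfolding cameron_liebler_def by blast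
  have "real (card (L \<inter> S)) = (\<Sum>P\<in>\<Union>S. w P)" using cl_partial[OF w] S unfolding spread_def by blast
  also have "\<dots> = real x" using S CL_W[OF L kn cardL w] unfolding spread_def by simp
  finally show "card (L \<inter> S) = x" by simp
qed

lemma CL_switch:
  fixes L :: "('n::finite \<Rightarrow> 'a::{field,finite}) set set"
  assumes cl: "cameron_liebler k L"
  shows "\<forall>R R'. conj_switching k R R' \<longrightarrow> card (L \<inter> R) = card (L \<inter> R')"
proof (intro allI impI)
  fix R R' :: "('n \<Rightarrow> 'a) set set" assume c: "conj_switching k R R'"
  obtain w :: "('n \<Rightarrow> 'a) \<Rightarrow> real" where w: "\<forall>S\<in>affine_kspaces k. (if S \<in> L then 1 else 0) = (\<Sum>P\<in>S. w P)"
    using cl unfolding cameron_liebler_def by blast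
  have "real (card (L \<inter> R)) = real (card (L \<inter> R'))"
    using cl_partial[OF w, of R] cl_partial[OF w, of R'] c unfolding conj_switching_def by simp
  then show "card (L \<inter> R) = card (L \<inter> R')" by simp
qed



lemma lc1: "lc 1 c vs = sm (c 0) (vs 0)"
  by (simp add: lc_def sm_def)

lemma li1: "lin_indep 1 (\<lambda>_. v) \<longleftrightarrow> v \<noteq> 0"
proof
  assume li: "lin_indep 1 (\<lambda>_. v)"
  show "v \<noteq> 0"
  proof
    assume "v = 0"
    then have "lc 1 (\<lambda>_. 1) (\<lambda>_. v) = 0" by (simp add: lc_def fun_eq_iff)
    then show False using li unfolding lin_indep_lc by auto
  qed
next
  assume v: "v \<noteq> 0"
  then obtain i where i: "v i \<noteq> 0" by (auto simp: fun_eq_iff)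
  show "lin_indep 1 (\<lambda>_. v)" unfolding lin_indep_lc
  proof (intro allI impI)
    fix c and j :: nat assume a: "lc 1 c (\<lambda>_. v) = 0" "j < 1"
    have "lc 1 c (\<lambda>_. v) i = 0" using a(1) by simp
    then have "c 0 * v i = 0" by (simp add: lc_def)
    then show "c j = 0" using i a(2) by simp
  qed
qed

lemma line_card: "l \<in> affine_kspaces 1 \<Longrightarrow> card l = CARD('a)"
  for l :: "('n::finite \<Rightarrow> 'a::{field,finite}) set"
proof -
  assume l: "l \<in> affine_kspaces 1"
  obtain s where s: "s \<in> l" using AK_dir(4)[OF l] by blast
  have "card l = card (tr s (dir l))" using AK_dir(3)[OF l s] by simp
  also have "\<dots> = card (dir l)" by (rule card_tr)
  also have "\<dots> = CARD('a) ^ 1" by (rule sub_card[OF AK_dir(1)[OF l]])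
  finally show ?thesis by simp
qed

lemma line_eq:
  fixes l m :: "('n::finite \<Rightarrow> 'a::{field,finite}) set"
  assumes l: "l \<in> affine_kspaces 1" and m: "m \<in> affine_kspaces 1"
    and P: "P \<in> l" "P \<in> m" and P': "P' \<in> l" "P' \<in> m" and ne: "P \<noteq> P'"
  shows "l = m"
proof -
  define U where "U = sp 1 (\<lambda>_. P' - P)"
  have U: "U \<in> Sub 1" unfolding U_def using ne li1[of "P' - P"] by (intro sp_in_Sub) simp
  have "dir X = U" if X: "X \<in> affine_kspaces 1" "P \<in> X" "P' \<in> X" for X
  proof -
    have "P' - P \<in> dir X" using X unfolding dir_def by blast
    then have "U \<subseteq> dir X" unfolding U_def by (intro sp_subset[OF AK_dir(2)[OF X(1)]]) simp
    then show ?thesis using sub_eq_sub[OF AK_dir(1)[OF X(1)] U] by simp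
  qed
  then have "dir l = dir m" using l m P P' by metis
  then show ?thesis using AK_dir(3)[OF l P(1)] AK_dir(3)[OF m P(2)] by simp
qed

lemma two_pts:
  fixes P P' :: "'n::finite \<Rightarrow> 'a::{field,finite}"
  assumes ne: "P \<noteq> P'"
  shows "card {m \<in> affine_kspaces 1. P \<in> m \<and> P' \<in> m} = 1"
proof -
  define l0 where "l0 = tr P (sp 1 (\<lambda>_. P' - P))"
  have U: "sp 1 (\<lambda>_. P' - P) \<in> Sub 1" using ne li1[of "P' - P"] by (intro sp_in_Sub) simp
  have l0: "l0 \<in> affine_kspaces 1" unfolding l0_def using U by (rule tr_in_AK)
  have "P \<in> l0" unfolding l0_def using self_in_tr[OF sub_subsp[OF U]] .
  moreover have "P' \<in> l0" unfolding l0_def mem_tr using vs_in_sp[of 0 1 "\<lambda>_. P' - P"] by simp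
  ultimately have "{m \<in> affine_kspaces 1. P \<in> m \<and> P' \<in> m} = {l0}"
    using l0 line_eq[OF l0 _ _ _ _ _ ne] by blast
  then show ?thesis by simp
qed

lemma meet_card:
  fixes l m :: "('n::finite \<Rightarrow> 'a::{field,finite}) set"
  assumes l: "l \<in> affine_kspaces 1" and m: "m \<in> affine_kspaces 1"
  shows "real (card (m \<inter> l)) = (if m \<inter> l = {} then 0 else 1) + (if m = l then real CARD('a) - 1 else 0)"
proof (cases "m = l")
  case True
  then show ?thesis using line_card[OF l] AK_dir(4)[OF l] by simp
next
  case False
  show ?thesis
  proof (cases "m \<inter> l = {}")
    case False': False
    have "\<forall>a\<in>m \<inter> l. \<forall>b\<in>m \<inter> l. a = b" using line_eq[OF l m] False by blast
    then have "card (m \<inter> l) \<le> Suc 0" by (simp add: card_le_Suc0_iff_eq)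
    moreover have "card (m \<inter> l) \<noteq> 0" using False' by simp
    ultimately have "card (m \<inter> l) = 1" by linarith
    then show ?thesis using False False' by simp
  qed (use False in simp)
qed

lemma KI:
  fixes L :: "('n::finite \<Rightarrow> 'a::{field,finite}) set set"
  assumes L: "L \<subseteq> affine_kspaces 1" and l: "l \<in> affine_kspaces 1"
  shows "(\<Sum>P\<in>l. real (card {m \<in> L. P \<in> m}))
       = real (card L) - real (card {m \<in> L. m \<inter> l = {}}) + (real CARD('a) - 1) * (if l \<in> L then 1 else 0)"
proof -
  have "(\<Sum>P\<in>l. real (card {m \<in> L. P \<in> m})) = (\<Sum>P\<in>l. \<Sum>m\<in>L. if P \<in> m then 1 else (0::real))"
  proof (intro sum.cong refl)
    fix P :: "'n \<Rightarrow> 'a"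
    have "{m \<in> L. P \<in> m} = L \<inter> {m. P \<in> m}" by blast
    then show "real (card {m \<in> L. P \<in> m}) = (\<Sum>m\<in>L. if P \<in> m then 1 else (0::real))"
      using sum_ind_card[of L "{m. P \<in> m}"] by simp
  qed
  also have "\<dots> = (\<Sum>m\<in>L. \<Sum>P\<in>l. if P \<in> m then 1 else (0::real))" by (rule sum.swap)
  also have "\<dots> = (\<Sum>m\<in>L. real (card (m \<inter> l)))"
    by (intro sum.cong refl) (simp add: sum_ind_card Int_commute)
  also have "\<dots> = (\<Sum>m\<in>L. (if m \<inter> l = {} then 0 else 1) + (if m = l then real CARD('a) - 1 else 0))"
  proof (intro sum.cong refl)
    fix m :: "('n \<Rightarrow> 'a) set" assume "m \<in> L"
    then have "m \<in> affine_kspaces 1" using L by blast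
    then show "real (card (m \<inter> l)) = (if m \<inter> l = {} then 0 else 1) + (if m = l then real CARD('a) - 1 else 0)"
      by (rule meet_card[OF l])
  qed
  also have "\<dots> = (\<Sum>m\<in>L. if m \<in> {m. m \<inter> l \<noteq> {}} then 1 else 0) + (\<Sum>m\<in>L. if m = l then real CARD('a) - 1 else 0)"
    unfolding sum.distrib by (intro arg_cong2[where f="(+)"] sum.cong) auto
  also have "(\<Sum>m\<in>L. if m \<in> {m. m \<inter> l \<noteq> {}} then 1 else (0::real)) = real (card (L \<inter> {m. m \<inter> l \<noteq> {}}))"
    by (rule sum_ind_card) simp
  also have "real (card (L \<inter> {m. m \<inter> l \<noteq> {}})) = real (card L) - real (card {m \<in> L. m \<inter> l = {}})"
  proof -
    have e: "L = (L \<inter> {m. m \<inter> l \<noteq> {}}) \<union> {m \<in> L. m \<inter> l = {}}" by blast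
    have d: "(L \<inter> {m. m \<inter> l \<noteq> {}}) \<inter> {m \<in> L. m \<inter> l = {}} = {}" by blast
    have "card ((L \<inter> {m. m \<inter> l \<noteq> {}}) \<union> {m \<in> L. m \<inter> l = {}})
        = card (L \<inter> {m. m \<inter> l \<noteq> {}}) + card {m \<in> L. m \<inter> l = {}}"
      by (rule card_Un_disjoint) (simp_all add: d)
    then have "card L = card (L \<inter> {m. m \<inter> l \<noteq> {}}) + card {m \<in> L. m \<inter> l = {}}"
      using e by simp
    then show ?thesis by simp
  qed
  also have "(\<Sum>m\<in>L. if m = l then real CARD('a) - 1 else 0) = (real CARD('a) - 1) * (if l \<in> L then 1 else 0)"
    by (simp add: sum.delta)
  finally show ?thesis .
qed



lemma deg_CL:
  fixes L :: "('n::finite \<Rightarrow> 'a::{field,finite}) set set"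
  assumes L: "L \<subseteq> affine_kspaces 1"
    and w: "\<forall>S\<in>affine_kspaces 1. (if S \<in> L then 1 else 0) = (\<Sum>P\<in>S. w P)"
  shows "real (card {m \<in> L. P \<in> m})
       = (real (card (Sub 1 :: ('n \<Rightarrow> 'a) set set)) - 1) * w P + (\<Sum>Q\<in>UNIV. w Q)"
proof -
  let ?A = "{m \<in> affine_kspaces 1. P \<in> m} :: ('n \<Rightarrow> 'a) set set"
  define r where "r = real (card (Sub 1 :: ('n \<Rightarrow> 'a) set set))"
  have "real (card {m \<in> L. P \<in> m}) = (\<Sum>m\<in>?A. if m \<in> L then 1 else 0)"
  proof -
    have "{m \<in> L. P \<in> m} = ?A \<inter> L" using L by blast
    then show ?thesis using sum_ind_card[of ?A L] by simp
  qed
  also have "\<dots> = (\<Sum>m\<in>?A. \<Sum>Q\<in>UNIV. if Q \<in> m then w Q else 0)"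
    using w by (intro sum.cong refl) (auto simp: sum.If_cases)
  also have "\<dots> = (\<Sum>Q\<in>UNIV. \<Sum>m\<in>?A. if Q \<in> m then w Q else 0)" by (rule sum.swap)
  also have "\<dots> = (\<Sum>Q\<in>UNIV. w Q * real (card {m \<in> affine_kspaces 1. P \<in> m \<and> Q \<in> m}))"
    by (intro sum.cong refl) (auto simp: sum.If_cases Int_def)
  also have "\<dots> = (\<Sum>Q\<in>UNIV. w Q + (if Q = P then (r - 1) * w Q else 0))"
  proof (intro sum.cong refl)
    fix Q :: "('n \<Rightarrow> 'a)"
    show "w Q * real (card {m \<in> affine_kspaces 1. P \<in> m \<and> Q \<in> m}) = w Q + (if Q = P then (r - 1) * w Q else 0)"
    proof (cases "Q = P")
      case True then show ?thesis using card_through[of 1 P] unfolding r_def by (simp add: algebra_simps)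
    next
      case False then show ?thesis using two_pts[of P Q] by simp
    qed
  qed
  also have "\<dots> = (\<Sum>Q\<in>UNIV. w Q) + (r - 1) * w P" by (simp add: sum.distrib)
  finally show ?thesis unfolding r_def by simp
qed

lemma gauss1: "gauss_binom Q a 1 = (Q ^ a - 1) / (Q - 1)"
  by (simp add: gauss_binom_def)

lemma gauss1': "gauss_binom Q a (Suc 0) = (Q ^ a - 1) / (Q - 1)"
  by (simp add: gauss_binom_def)

lemma k1_equiv:
  fixes L :: "('n::finite \<Rightarrow> 'a::{field,finite}) set set"
  assumes L: "L \<subseteq> affine_kspaces 1" and n: "CARD('n) \<ge> 3"
    and cardL: "real (card L) = real x * gauss_binom (real CARD('a)) CARD('n) 1"
  shows "cameron_liebler 1 L \<longleftrightarrow>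
              ((\<forall>l\<in>affine_kspaces 1.
                  real (card {m\<in>L. m \<inter> l = {}}) =
                    (real CARD('a) ^ 2 * gauss_binom (real CARD('a)) (CARD('n) - 2) 1 + 1)
                    * (real x - (if l \<in> L then 1 else 0)))
               \<and> (\<forall>v::'n \<Rightarrow> 'a. v \<noteq> (\<lambda>_. 0) \<longrightarrow>
                    card {m\<in>L. \<exists>p. m = aff_span 1 p (\<lambda>_. v)} = x))"
proof -
  define Q where "Q = real CARD('a)"
  have Q: "Q \<ge> 2" unfolding Q_def using q_ge2[where 'a='a] by simp
  define r where "r = real (card (Sub 1 :: ('n \<Rightarrow> 'a) set set))"
  have r: "r = (Q ^ CARD('n) - 1) / (Q - 1)"
    unfolding r_def Q_def using card_Sub_gauss[of 1, where 'n='n and 'a='a] n by (simp add: gauss1 gauss1')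
  have c: "Q ^ 2 * gauss_binom Q (CARD('n) - 2) 1 + 1 = r - Q"
  proof -
    have "CARD('n) = 2 + (CARD('n) - 2)" using n by simp
    then have e: "Q ^ CARD('n) = Q ^ 2 * Q ^ (CARD('n) - 2)" by (metis power_add)
    have "Q - 1 \<noteq> 0" using Q by simp
    then show ?thesis unfolding r gauss1 e by (simp add: field_simps power2_eq_square)
  qed
  have r1: "r - 1 \<noteq> 0"
  proof -
    have "Q ^ CARD('n) \<ge> Q ^ 2" using Q n by (intro power_increasing) auto
    moreover have "Q ^ 2 > Q" using Q by (simp add: power2_eq_square)
    ultimately have "Q ^ CARD('n) - 1 \<noteq> Q - 1" by simp
    then show ?thesis unfolding r using Q by (simp add: field_simps)
  qed
  have cardL': "real (card L) = real x * r"
    using cardL card_Sub_gauss[of 1, where 'n='n and 'a='a] n unfolding r_def by simp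
  let ?deg = "\<lambda>P. real (card {m \<in> L. P \<in> m})"
  show ?thesis unfolding Q_def[symmetric] c
  proof
    assume cl: "cameron_liebler 1 L"
    obtain w :: "('n \<Rightarrow> 'a) \<Rightarrow> real" where w: "\<forall>S\<in>affine_kspaces 1. (if S \<in> L then 1 else 0) = (\<Sum>P\<in>S. w P)"
      using cl unfolding cameron_liebler_def by blast
    have W: "(\<Sum>P\<in>UNIV. w P) = real x" using CL_W[OF L _ cardL w] n by simp
    have part1: "real (card {m\<in>L. m \<inter> l = {}}) = (r - Q) * (real x - (if l \<in> L then 1 else 0))"
      if l: "l \<in> affine_kspaces 1" for l
    proof -
      have "(\<Sum>P\<in>l. ?deg P) = (\<Sum>P\<in>l. (r - 1) * w P + real x)"
        using deg_CL[OF L w] W unfolding r_def by simp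
      also have "\<dots> = (r - 1) * (\<Sum>P\<in>l. w P) + Q * real x"
        using line_card[OF l] unfolding Q_def by (simp add: sum.distrib sum_distrib_left)
      also have "(\<Sum>P\<in>l. w P) = (if l \<in> L then 1 else 0)" using w l by simp
      finally have "(\<Sum>P\<in>l. ?deg P) = (r - 1) * (if l \<in> L then 1 else 0) + Q * real x" .
      then show ?thesis using KI[OF L l] cardL' unfolding Q_def[symmetric] by (simp add: algebra_simps)
    qed
    have part2: "card {m\<in>L. \<exists>p. m = aff_span 1 p (\<lambda>_. v)} = x" if v: "v \<noteq> (\<lambda>_. 0)" for v :: "'n \<Rightarrow> 'a"
    proof -
      define U where "U = sp 1 (\<lambda>_. v)"
      have U: "U \<in> Sub 1" unfolding U_def using li1[of v] v by (intro sp_in_Sub) (simp add: zero_fun_def)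
      have "{m\<in>L. \<exists>p. m = aff_span 1 p (\<lambda>_. v)} = L \<inter> cls U"
        unfolding cls_def U_def aff_span_tr by blast
      then show ?thesis using CL_spread[OF L _ cardL cl] n cls_spread[OF U] by simp
    qed
    show "(\<forall>l\<in>affine_kspaces 1. real (card {m\<in>L. m \<inter> l = {}}) = (r - Q) * (real x - (if l \<in> L then 1 else 0)))
       \<and> (\<forall>v::'n \<Rightarrow> 'a. v \<noteq> (\<lambda>_. 0) \<longrightarrow> card {m\<in>L. \<exists>p. m = aff_span 1 p (\<lambda>_. v)} = x)"
      using part1 part2 by blast
  next
    assume h: "(\<forall>l\<in>affine_kspaces 1. real (card {m\<in>L. m \<inter> l = {}}) = (r - Q) * (real x - (if l \<in> L then 1 else 0)))
       \<and> (\<forall>v::'n \<Rightarrow> 'a. v \<noteq> (\<lambda>_. 0) \<longrightarrow> card {m\<in>L. \<exists>p. m = aff_span 1 p (\<lambda>_. v)} = x)"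
    define w where "w P = (?deg P - real x) / (r - 1)" for P
    show "cameron_liebler 1 L" unfolding cameron_liebler_def
    proof (intro exI[of _ w] ballI)
      fix l :: "('n \<Rightarrow> 'a) set" assume l: "l \<in> affine_kspaces 1"
      define f where "f = (if l \<in> L then 1 else (0::real))"
      have "(\<Sum>P\<in>l. ?deg P) = real (card L) - (r - Q) * (real x - f) + (Q - 1) * f"
        using KI[OF L l] h l unfolding Q_def[symmetric] f_def by simp
      also have "\<dots> = Q * real x + (r - 1) * f" using cardL' by (simp add: algebra_simps)
      finally have sd: "(\<Sum>P\<in>l. ?deg P) = Q * real x + (r - 1) * f" .
      have "(\<Sum>P\<in>l. w P) = ((\<Sum>P\<in>l. ?deg P) - Q * real x) / (r - 1)"
        unfolding w_def using line_card[OF l] unfolding Q_def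
        by (simp add: sum_divide_distrib[symmetric] sum_subtractf)
      also have "\<dots> = f" using sd r1 by simp
      finally show "(if l \<in> L then 1 else 0) = (\<Sum>P\<in>l. w P)" unfolding f_def by simp
    qed
  qed
qed



theorem theorem3p7:
  fixes L :: "('n::finite \<Rightarrow> 'a::{field,finite}) set set" and k x :: nat
  assumes "k \<ge> 1" and "CARD('n) \<ge> 2 * k + 1"
    and "L \<subseteq> affine_kspaces k" and "x > 0"
    and "real (card L) = real x * gauss_binom (real CARD('a)) CARD('n) k"
  shows "(cameron_liebler k L \<longleftrightarrow> (\<forall>S. spread k S \<longrightarrow> card (L \<inter> S) = x))
       \<and> (cameron_liebler k L \<longleftrightarrow>
            (\<forall>R R'. conj_switching k R R' \<longrightarrow> card (L \<inter> R) = card (L \<inter> R')))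
       \<and> (k = 1 \<longrightarrow>
            (cameron_liebler k L \<longleftrightarrow>
              ((\<forall>l\<in>affine_kspaces 1.
                  real (card {m\<in>L. m \<inter> l = {}}) =
                    (real CARD('a) ^ 2 * gauss_binom (real CARD('a)) (CARD('n) - 2) 1 + 1)
                    * (real x - (if l \<in> L then 1 else 0)))
               \<and> (\<forall>v::'n \<Rightarrow> 'a. v \<noteq> (\<lambda>_. 0) \<longrightarrow>
                    card {m\<in>L. \<exists>p. m = aff_span 1 p (\<lambda>_. v)} = x))))"
proof -
  have kn2: "k + 2 \<le> CARD('n)" and kn: "k \<le> CARD('n)" using assms(1,2) by auto
  have A: "cameron_liebler k L \<longleftrightarrow> (\<forall>S. spread k S \<longrightarrow> card (L \<inter> S) = x)"
    using CL_spread[OF assms(3) kn assms(5)] spread_to_CL[OF assms(3) kn2] by blast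
  have B: "cameron_liebler k L \<longleftrightarrow>
            (\<forall>R R'. conj_switching k R R' \<longrightarrow> card (L \<inter> R) = card (L \<inter> R'))"
    using CL_switch[of k L] switch_to_CL[OF assms(3) kn2] by blast
  have C: "cameron_liebler k L \<longleftrightarrow>
              ((\<forall>l\<in>affine_kspaces 1.
                  real (card {m\<in>L. m \<inter> l = {}}) =
                    (real CARD('a) ^ 2 * gauss_binom (real CARD('a)) (CARD('n) - 2) 1 + 1)
                    * (real x - (if l \<in> L then 1 else 0)))
               \<and> (\<forall>v::'n \<Rightarrow> 'a. v \<noteq> (\<lambda>_. 0) \<longrightarrow>
                    card {m\<in>L. \<exists>p. m = aff_span 1 p (\<lambda>_. v)} = x))" if k1: "k = 1"
    using k1_equiv[of L x] assms(2,3,5) k1 by simp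
  show ?thesis using A B C by blast
qed


end
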